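(* Let $K$ be an infinite, algebraically closed, totally ordered quasi-field of characteristic $1$, and let $P,Q\in K[X_1,\dots,X_n]$. (a) The polynomial functions $K^n\to K$ defined by $P$ and by its convex hull $\mathrm{conv}(P)$ coincide. (b) The polynomial functions $\tilde P$ and $\tilde Q$ are equal if and only if $\mathrm{conv}(P)=\mathrm{conv}(Q)$.
   Context: A quasi-field of characteristic $1$ is a commutative semiring $K$ with $1+1=1$ in which every nonzero element is multiplicatively invertible; ordered by $u\le v$ iff $u+v=v$, totally ordered meaning the order is total (so $u+v=\max(u,v)$). $K$ is algebraically closed if every nonconstant polynomial of $K[X]$ has a root in $K$ (a root of $P$ being a point where $P$ vanishes or where the maximum of its monomials is attained at least twice); in particular every element has unique $m$-th roots. For $P=\sum_{\alpha\in I}\lambda_\alpha X^\alpha$ ($I\subset\mathbb N^n$ finite, $\lambda_\alpha\neq0$), $\mathrm{conv}(P)=\sum_{\gamma}\mu_\gamma X^\gamma$, the sum over lattice points $\gamma\in\mathbb N^n$ of the convex hull of $I$, where $\mu_\gamma$ is the largest value of $\left(\prod_{\alpha\in I}\lambda_\alpha^{c_\alpha}\right)^{1/m}$ over all $m\ge1$ and $c_\alpha\in\mathbb N$ with $\sum c_\alpha=m$ and $\sum c_\alpha\alpha=m\gamma$; equivalently, the smallest "convex" polynomial $\ge P$. $\tilde P:K^n\to K$ denotes $x\mapsto P(x)$. *)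

theory Defs
  imports "HOL-Analysis.Analysis"
begin

class qfield1 = comm_semiring_1 +
  assumes one_plus_one_qf: "1 + 1 = 1"
  and mult_inv_ex_qf: "x \<noteq> 0 \<Longrightarrow> \<exists>y. x * y = 1"

definition qf_le :: "'a::qfield1 \<Rightarrow> 'a \<Rightarrow> bool" where
  "qf_le u v \<longleftrightarrow> u + v = v"

definition qf_total :: "'a::qfield1 itself \<Rightarrow> bool" where
  "qf_total _ \<longleftrightarrow> (\<forall>u v::'a. qf_le u v \<or> qf_le v u)"

text \<open>Univariate polynomials as finitely supported coefficient functions.
A root of p: p vanishes at x, or the maximum of its monomials is attained at least twice.\<close>
definition upoly_eval :: "(nat \<Rightarrow> 'a::qfield1) \<Rightarrow> 'a \<Rightarrow> 'a" where
  "upoly_eval p x = (\<Sum>k\<in>{k. p k \<noteq> 0}. p k * x ^ k)"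

definition upoly_root :: "(nat \<Rightarrow> 'a::qfield1) \<Rightarrow> 'a \<Rightarrow> bool" where
  "upoly_root p x \<longleftrightarrow> upoly_eval p x = 0 \<or>
     (\<exists>k1 k2. k1 \<noteq> k2 \<and> p k1 \<noteq> 0 \<and> p k2 \<noteq> 0 \<and>
        p k1 * x ^ k1 = upoly_eval p x \<and> p k2 * x ^ k2 = upoly_eval p x)"

definition qf_alg_closed :: "'a::qfield1 itself \<Rightarrow> bool" where
  "qf_alg_closed _ \<longleftrightarrow>
     (\<forall>p::nat \<Rightarrow> 'a. finite {k. p k \<noteq> 0} \<and> (\<exists>k>0. p k \<noteq> 0) \<longrightarrow> (\<exists>x. upoly_root p x))"

definition supp_poly :: "(('n::finite \<Rightarrow> nat) \<Rightarrow> 'a::qfield1) \<Rightarrow> ('n \<Rightarrow> nat) set" where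
  "supp_poly P = {\<alpha>. P \<alpha> \<noteq> 0}"

definition peval :: "(('n::finite \<Rightarrow> nat) \<Rightarrow> 'a::qfield1) \<Rightarrow> ('n \<Rightarrow> 'a) \<Rightarrow> 'a" where
  "peval P x = (\<Sum>\<alpha>\<in>supp_poly P. P \<alpha> * (\<Prod>i\<in>UNIV. x i ^ \<alpha> i))"

definition exp_to_real :: "('n::finite \<Rightarrow> nat) \<Rightarrow> real ^ 'n" where
  "exp_to_real \<alpha> = (\<chi> i. real (\<alpha> i))"

definition hull_lattice :: "(('n::finite \<Rightarrow> nat) \<Rightarrow> 'a::qfield1) \<Rightarrow> ('n \<Rightarrow> nat) set" where
  "hull_lattice P = {\<gamma>. exp_to_real \<gamma> \<in> convex hull (exp_to_real ` supp_poly P)}"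

definition conv_cands :: "(('n::finite \<Rightarrow> nat) \<Rightarrow> 'a::qfield1) \<Rightarrow> ('n \<Rightarrow> nat) \<Rightarrow> 'a set" where
  "conv_cands P \<gamma> = {y. \<exists>(m::nat) (c::('n \<Rightarrow> nat) \<Rightarrow> nat). m \<ge> 1 \<and>
      (\<Sum>\<alpha>\<in>supp_poly P. c \<alpha>) = m \<and>
      (\<forall>i. (\<Sum>\<alpha>\<in>supp_poly P. c \<alpha> * \<alpha> i) = m * \<gamma> i) \<and>
      y ^ m = (\<Prod>\<alpha>\<in>supp_poly P. P \<alpha> ^ c \<alpha>)}"

definition conv_poly :: "(('n::finite \<Rightarrow> nat) \<Rightarrow> 'a::qfield1) \<Rightarrow> ('n \<Rightarrow> nat) \<Rightarrow> 'a" where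
  "conv_poly P \<gamma> = (if \<gamma> \<in> hull_lattice P
     then (THE y. y \<in> conv_cands P \<gamma> \<and> (\<forall>z\<in>conv_cands P \<gamma>. qf_le z y)) else 0)"

end

theory Submission
  imports Defs
begin

definition mon :: "('n::finite \<Rightarrow> 'a::comm_monoid_mult) \<Rightarrow> ('n \<Rightarrow> nat) \<Rightarrow> 'a" where
  "mon x f = (\<Prod>j\<in>UNIV. x j ^ f j)"

lemma mon_add: "mon x (\<lambda>j. f j + g j) = mon x f * mon x g"
  by (simp add: mon_def power_add prod.distrib)

lemma prod_pow_distrib: "prod f A ^ n = prod (\<lambda>x. (f x) ^ n) A"
  for f :: "'b \<Rightarrow> 'a::comm_monoid_mult"
  by (induct A rule: infinite_finite_induct) (auto simp add: power_mult_distrib)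

lemma mon_mult: "mon x (\<lambda>j. k * f j) = mon x f ^ k"
proof -
  have "(\<Prod>j\<in>UNIV. x j ^ (k*f j)) = (\<Prod>j\<in>UNIV. (x j ^ f j)^k)"
    by (simp add: power_mult[symmetric] mult.commute)
  then show ?thesis unfolding mon_def by (simp only: prod_pow_distrib)
qed

lemma mon_sum: "finite I \<Longrightarrow> mon x (\<lambda>j. \<Sum>r\<in>I. w r * f r j) = (\<Prod>r\<in>I. mon x (f r) ^ w r)"
proof (induction I rule: finite_induct)
  case empty then show ?case by (simp add: mon_def)
next
  case (insert a F)
  have "mon x (\<lambda>j. \<Sum>r\<in>insert a F. w r * f r j) = mon x (\<lambda>j. w a * f a j + (\<Sum>r\<in>F. w r * f r j))"
    using insert by simp
  also have "\<dots> = mon x (f a) ^ w a * mon x (\<lambda>j. (\<Sum>r\<in>F. w r * f r j))"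
    by (simp add: mon_add mon_mult)
  finally show ?case using insert by simp
qed

lemma mon_zero: "mon x (\<lambda>j. 0) = 1"
  by (simp add: mon_def)

lemma mon_split: "mon x f = mon x (f(i:=0)) * x i ^ f i"
proof -
  have "mon x f = x i ^ f i * (\<Prod>j\<in>UNIV-{i}. x j ^ f j)"
    unfolding mon_def by (subst prod.remove[of _ i]) auto
  moreover have "mon x (f(i:=0)) = (\<Prod>j\<in>UNIV-{i}. x j ^ f j)"
    unfolding mon_def by (subst prod.remove[of _ i]) (auto intro!: prod.cong)
  ultimately show ?thesis by (simp add: mult.commute)
qed

lemma mon_upd: "mon (x(i:=z)) f = mon x (f(i:=0)) * z ^ f i"
proof -
  have "mon (x(i:=z)) f = mon (x(i:=z)) (f(i:=0)) * z ^ f i" using mon_split[of "x(i:=z)" f i] by simp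
  moreover have "mon (x(i:=z)) (f(i:=0)) = mon x (f(i:=0))"
    unfolding mon_def by (rule prod.cong) auto
  ultimately show ?thesis by simp
qed

locale ogroup =
  fixes C :: "'a::comm_monoid_mult set" and lt :: "'a \<Rightarrow> 'a \<Rightarrow> bool"
  assumes one_C: "1 \<in> C"
  and mult_C: "a\<in>C \<Longrightarrow> b\<in>C \<Longrightarrow> a*b \<in> C"
  and inv_C: "a \<in> C \<Longrightarrow> \<exists>b\<in>C. a*b = 1"
  and irrefl: "\<not> lt a a"
  and trans: "a\<in>C \<Longrightarrow> b\<in>C \<Longrightarrow> c\<in>C \<Longrightarrow> lt a b \<Longrightarrow> lt b c \<Longrightarrow> lt a c"
  and total: "a\<in>C \<Longrightarrow> b\<in>C \<Longrightarrow> a \<noteq> b \<Longrightarrow> lt a b \<or> lt b a"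
  and mono: "a\<in>C \<Longrightarrow> b\<in>C \<Longrightarrow> c\<in>C \<Longrightarrow> lt a b \<Longrightarrow> lt (a*c) (b*c)"
  and roots: "a \<in> C \<Longrightarrow> n > 0 \<Longrightarrow> \<exists>r\<in>C. r^n = a"
  and big: "\<exists>g\<in>C. lt 1 g"
begin

lemma pow_C: "a \<in> C \<Longrightarrow> a ^ n \<in> C"
  by (induction n) (auto simp: one_C mult_C)

lemma prod_C: "(\<And>r. r \<in> I \<Longrightarrow> f r \<in> C) \<Longrightarrow> prod f I \<in> C"
  by (induction I rule: infinite_finite_induct) (auto simp: one_C mult_C)

lemma mon_C: "(\<And>j. x j \<in> C) \<Longrightarrow> mon x f \<in> C"
  unfolding mon_def by (rule prod_C) (auto intro: pow_C)

lemma asym: "a\<in>C \<Longrightarrow> b\<in>C \<Longrightarrow> lt a b \<Longrightarrow> \<not> lt b a"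
  using trans irrefl by blast

lemma mono_l: "a\<in>C \<Longrightarrow> b\<in>C \<Longrightarrow> c\<in>C \<Longrightarrow> lt a b \<Longrightarrow> lt (c*a) (c*b)"
  using mono by (simp add: mult.commute)

lemma cancel: "a\<in>C \<Longrightarrow> b\<in>C \<Longrightarrow> c\<in>C \<Longrightarrow> lt (a*c) (b*c) \<Longrightarrow> lt a b"
  by (metis asym irrefl mono mult_C total)

lemma cancel_l: "a\<in>C \<Longrightarrow> b\<in>C \<Longrightarrow> c\<in>C \<Longrightarrow> lt (c*a) (c*b) \<Longrightarrow> lt a b"
  using cancel by (simp add: mult.commute)

lemma mult_strict: "a\<in>C \<Longrightarrow> b\<in>C \<Longrightarrow> c\<in>C \<Longrightarrow> d\<in>C \<Longrightarrow> lt a b \<Longrightarrow> lt c d \<Longrightarrow> lt (a*c) (b*d)"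
  by (meson mono mono_l mult_C trans)

lemma mult_le_strict: "a\<in>C \<Longrightarrow> b\<in>C \<Longrightarrow> c\<in>C \<Longrightarrow> d\<in>C \<Longrightarrow> lt a b \<or> a = b \<Longrightarrow> lt c d \<Longrightarrow> lt (a*c) (b*d)"
  using mult_strict mono_l by blast

lemma mult_le: "a\<in>C \<Longrightarrow> b\<in>C \<Longrightarrow> c\<in>C \<Longrightarrow> d\<in>C \<Longrightarrow> lt a b \<or> a = b \<Longrightarrow> lt c d \<or> c = d \<Longrightarrow> lt (a*c) (b*d) \<or> a*c = b*d"
  using mult_le_strict mono by blast

lemma pow_strict: "a\<in>C \<Longrightarrow> b\<in>C \<Longrightarrow> lt a b \<Longrightarrow> n > 0 \<Longrightarrow> lt (a^n) (b^n)"
proof (induction n)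
  case 0 then show ?case by simp
next
  case (Suc n)
  show ?case
  proof (cases "n = 0")
    case True then show ?thesis using Suc by simp
  next
    case False then show ?thesis using Suc by (simp add: mult_strict pow_C)
  qed
qed

lemma pow_le: "a\<in>C \<Longrightarrow> b\<in>C \<Longrightarrow> lt a b \<or> a = b \<Longrightarrow> lt (a^n) (b^n) \<or> a^n = b^n"
  by (cases "n = 0") (auto simp: pow_strict)

lemma pow_strict_rev: "a\<in>C \<Longrightarrow> b\<in>C \<Longrightarrow> lt (a^n) (b^n) \<Longrightarrow> lt a b"
  by (metis asym irrefl pow_C pow_le total)

lemma root_unique: "a\<in>C \<Longrightarrow> b\<in>C \<Longrightarrow> a^n = b^n \<Longrightarrow> n > 0 \<Longrightarrow> a = b"
  by (metis irrefl pow_strict total)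

lemma prod_le: "finite I \<Longrightarrow> (\<And>r. r\<in>I \<Longrightarrow> A r \<in> C \<and> B r \<in> C \<and> (lt (B r) (A r) \<or> B r = A r))
   \<Longrightarrow> lt (prod B I) (prod A I) \<or> prod B I = prod A I"
proof (induction I rule: finite_induct)
  case empty then show ?case by simp
next
  case (insert x F)
  then show ?case by (simp add: mult_le prod_C)
qed

lemma prod_strict: "finite I \<Longrightarrow> (\<And>r. r\<in>I \<Longrightarrow> A r \<in> C \<and> B r \<in> C \<and> (lt (B r) (A r) \<or> B r = A r))
   \<Longrightarrow> r0 \<in> I \<Longrightarrow> lt (B r0) (A r0) \<Longrightarrow> lt (prod B I) (prod A I)"
proof (induction I rule: finite_induct)
  case empty then show ?case by simp
next
  case (insert x F)
  show ?case
  proof (cases "r0 = x")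
    case True
    then show ?thesis using insert prod_le[of F A B]
      by (simp add: mult.commute[of "B x"] mult.commute[of "A x"] mult_le_strict prod_C)
  next
    case False
    then show ?thesis using insert by (simp add: mult_le_strict prod_C)
  qed
qed

lemma prod_pow_strict: "finite I \<Longrightarrow> (\<And>r. r\<in>I \<Longrightarrow> A r \<in> C \<and> B r \<in> C \<and> lt (B r) (A r))
   \<Longrightarrow> r0 \<in> I \<Longrightarrow> w r0 > 0 \<Longrightarrow> lt (\<Prod>r\<in>I. B r ^ w r) (\<Prod>r\<in>I. A r ^ w r)"
  by (rule prod_strict) (auto simp: pow_C pow_strict pow_le)

definition iv :: "'a \<Rightarrow> 'a" where "iv a = (SOME b. b \<in> C \<and> a * b = 1)"
definition rt :: "nat \<Rightarrow> 'a \<Rightarrow> 'a" where "rt n a = (SOME r. r \<in> C \<and> r ^ n = a)"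

lemma iv: "a \<in> C \<Longrightarrow> iv a \<in> C \<and> a * iv a = 1"
  unfolding iv_def by (rule someI_ex) (use inv_C in blast)

lemma rt: "a \<in> C \<Longrightarrow> n > 0 \<Longrightarrow> rt n a \<in> C \<and> rt n a ^ n = a"
  unfolding rt_def by (rule someI_ex) (use roots in blast)

lemma max_ex: "finite X \<Longrightarrow> X \<noteq> {} \<Longrightarrow> X \<subseteq> C \<Longrightarrow> \<exists>m\<in>X. \<forall>x\<in>X. lt x m \<or> x = m"
proof (induction X rule: finite_ne_induct)
  case (singleton x) then show ?case by auto
next
  case (insert x F)
  then obtain m where m: "m \<in> F" "\<forall>y\<in>F. lt y m \<or> y = m" by auto
  show ?case
  proof (cases "lt m x")
    case True
    have "\<forall>y\<in>insert x F. lt y x \<or> y = x"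
    proof
      fix y assume y: "y \<in> insert x F"
      show "lt y x \<or> y = x"
      proof (cases "y = x")
        case False
        then have "y \<in> F" using y by auto
        then have "lt y m \<or> y = m" using m by auto
        then show ?thesis using trans[of y m x] True insert.prems m(1) \<open>y \<in> F\<close> by auto
      qed simp
    qed
    then show ?thesis by auto
  next
    case False
    then have "lt x m \<or> x = m" using total[of x m] insert.prems m by auto
    then show ?thesis using m by auto
  qed
qed

lemma min_ex: "finite X \<Longrightarrow> X \<noteq> {} \<Longrightarrow> X \<subseteq> C \<Longrightarrow> \<exists>m\<in>X. \<forall>x\<in>X. lt m x \<or> x = m"
proof (induction X rule: finite_ne_induct)
  case (singleton x) then show ?case by auto
next
  case (insert x F)
  then obtain m where m: "m \<in> F" "\<forall>y\<in>F. lt m y \<or> y = m" by auto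
  show ?case
  proof (cases "lt x m")
    case True
    have "\<forall>y\<in>insert x F. lt x y \<or> y = x"
    proof
      fix y assume y: "y \<in> insert x F"
      show "lt x y \<or> y = x"
      proof (cases "y = x")
        case False
        then have "y \<in> F" using y by auto
        then have "lt m y \<or> y = m" using m by auto
        then show ?thesis using trans[of x m y] True insert.prems m(1) \<open>y \<in> F\<close> by auto
      qed simp
    qed
    then show ?thesis by auto
  next
    case False
    then have "lt m x \<or> x = m" using total[of x m] insert.prems m by auto
    then show ?thesis using m by auto
  qed
qed

lemma lt_1_iv: "g \<in> C \<Longrightarrow> lt 1 g \<Longrightarrow> lt (iv g) 1"
proof -
  assume g: "g \<in> C" "lt 1 g"
  have "lt (1 * iv g) (g * iv g)" by (rule mono) (use g iv one_C in auto)
  then show ?thesis using iv[OF g(1)] by simp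
qed

lemma le_lt_trans: "a\<in>C \<Longrightarrow> b\<in>C \<Longrightarrow> c\<in>C \<Longrightarrow> lt a b \<or> a = b \<Longrightarrow> lt b c \<Longrightarrow> lt a c"
  using trans[of a b c] by auto

lemma lt_le_trans: "a\<in>C \<Longrightarrow> b\<in>C \<Longrightarrow> c\<in>C \<Longrightarrow> lt a b \<Longrightarrow> lt b c \<or> b = c \<Longrightarrow> lt a c"
  using trans[of a b c] by auto

lemma interval: assumes "finite A" "finite B" "A \<subseteq> C" "B \<subseteq> C" "\<forall>x\<in>A. \<forall>y\<in>B. lt x y"
  shows "\<exists>z\<in>C. (\<forall>x\<in>A. lt x z) \<and> (\<forall>y\<in>B. lt z y)"
proof -
  obtain g where g: "g \<in> C" "lt 1 g" using big by blast
  show ?thesis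
  proof (cases "A = {}")
    case A: True
    show ?thesis
    proof (cases "B = {}")
      case True then show ?thesis using A one_C by blast
    next
      case False
      then obtain m where m: "m \<in> B" "\<forall>y\<in>B. lt m y \<or> y = m" using min_ex[OF assms(2) False assms(4)] by blast
      have mC: "m \<in> C" using m(1) assms(4) by auto
      have ig: "lt (iv g) 1" using lt_1_iv[OF g] .
      have "lt (m * iv g) (m * 1)" using mono_l[OF _ one_C mC ig] iv[OF g(1)] by blast
      then have zm: "lt (m * iv g) m" by simp
      have zC: "m * iv g \<in> C" using mC iv[OF g(1)] mult_C by blast
      have "\<forall>y\<in>B. lt (m * iv g) y"
      proof
        fix y assume y: "y \<in> B"
        then have "lt m y \<or> m = y" using m by auto
        then show "lt (m * iv g) y" using lt_le_trans[OF zC mC _ zm] y assms(4) by auto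
      qed
      then show ?thesis using A zC by auto
    qed
  next
    case A: False
    then obtain M where M: "M \<in> A" "\<forall>y\<in>A. lt y M \<or> y = M" using max_ex[OF assms(1) A assms(3)] by blast
    have MC: "M \<in> C" using M(1) assms(3) by auto
    show ?thesis
    proof (cases "B = {}")
      case True
      have "lt (M * 1) (M * g)" using mono_l[OF one_C g(1) MC g(2)] .
      then have Mz: "lt M (M * g)" by simp
      have zC: "M * g \<in> C" using MC g mult_C by blast
      have "\<forall>y\<in>A. lt y (M * g)"
      proof
        fix y assume y: "y \<in> A"
        then have "lt y M \<or> y = M" using M by auto
        then show "lt y (M * g)" using le_lt_trans[OF _ MC zC _ Mz] y assms by auto
      qed
      then show ?thesis using True zC by auto
    next
      case False
      then obtain m where m: "m \<in> B" "\<forall>y\<in>B. lt m y \<or> y = m" using min_ex[OF assms(2) False assms(4)] by blast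
      have mC: "m \<in> C" using m(1) assms(4) by auto
      have Mm: "lt M m" using assms(5) M(1) m(1) by blast
      define z where "z = rt 2 (M * m)"
      have z: "z \<in> C" "z ^ 2 = M * m" using rt[of "M*m" 2] MC mC mult_C z_def by auto
      have "lt (M * M) (M * m)" using mono_l[OF MC mC MC Mm] .
      then have "lt (M^2) (z^2)" using z by (simp add: power2_eq_square)
      then have Mz: "lt M z" using pow_strict_rev MC z by blast
      have "lt (M * m) (m * m)" using mono[OF MC mC mC Mm] .
      then have "lt (z^2) (m^2)" using z by (simp add: power2_eq_square)
      then have zm: "lt z m" using pow_strict_rev mC z by blast
      have "\<forall>y\<in>A. lt y z"
      proof
        fix y assume y: "y \<in> A"
        then have "lt y M \<or> y = M" using M by auto
        then show "lt y z" using le_lt_trans[OF _ MC z(1) _ Mz] y assms by auto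
      qed
      moreover have "\<forall>y\<in>B. lt z y"
      proof
        fix y assume y: "y \<in> B"
        then have "lt m y \<or> m = y" using m by auto
        then show "lt z y" using lt_le_trans[OF z(1) mC _ zm] y assms by auto
      qed
      ultimately show ?thesis using z by auto
    qed
  qed
qed

lemma sep: assumes "finite L" "finite U"
  and La: "\<forall>r\<in>L. a r > 0 \<and> \<alpha> r \<in> C \<and> \<beta> r \<in> C" and Ub: "\<forall>s\<in>U. b s > 0 \<and> \<alpha> s \<in> C \<and> \<beta> s \<in> C"
  and H: "\<forall>r\<in>L. \<forall>s\<in>U. lt (\<alpha> r ^ b s * \<alpha> s ^ a r) (\<beta> r ^ b s * \<beta> s ^ a r)"
  shows "\<exists>z\<in>C. (\<forall>r\<in>L. lt (\<alpha> r) (\<beta> r * z ^ a r)) \<and> (\<forall>s\<in>U. lt (\<alpha> s * z ^ b s) (\<beta> s))"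
proof -
  define l where "l r = rt (a r) (\<alpha> r * iv (\<beta> r))" for r
  define u where "u s = rt (b s) (\<beta> s * iv (\<alpha> s))" for s
  have l: "l r \<in> C \<and> l r ^ a r = \<alpha> r * iv (\<beta> r)" if "r \<in> L" for r
    using rt[of "\<alpha> r * iv (\<beta> r)" "a r"] La that iv mult_C l_def by auto
  have u: "u s \<in> C \<and> u s ^ b s = \<beta> s * iv (\<alpha> s)" if "s \<in> U" for s
    using rt[of "\<beta> s * iv (\<alpha> s)" "b s"] Ub that iv mult_C u_def by auto
  have lu: "lt (l r) (u s)" if r: "r \<in> L" and s: "s \<in> U" for r s
  proof -
    have C1: "\<alpha> r \<in> C" "\<beta> r \<in> C" "\<alpha> s \<in> C" "\<beta> s \<in> C" "iv (\<beta> r) \<in> C" "iv (\<alpha> s) \<in> C"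
      using La Ub r s iv by auto
    define k where "k = iv (\<beta> r) ^ b s * iv (\<alpha> s) ^ a r"
    have kC: "k \<in> C" using C1 pow_C mult_C k_def by auto
    have "lt ((\<alpha> r ^ b s * \<alpha> s ^ a r) * k) ((\<beta> r ^ b s * \<beta> s ^ a r) * k)"
      using mono[OF _ _ kC H[rule_format, OF r s]] C1 pow_C mult_C by auto
    moreover have "(\<alpha> r ^ b s * \<alpha> s ^ a r) * k = (\<alpha> r * iv (\<beta> r)) ^ b s * (\<alpha> s * iv (\<alpha> s)) ^ a r"
      by (simp add: k_def power_mult_distrib ac_simps)
    moreover have "(\<beta> r ^ b s * \<beta> s ^ a r) * k = (\<beta> r * iv (\<beta> r)) ^ b s * (\<beta> s * iv (\<alpha> s)) ^ a r"
      by (simp add: k_def power_mult_distrib ac_simps)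
    ultimately have "lt ((\<alpha> r * iv (\<beta> r)) ^ b s) ((\<beta> s * iv (\<alpha> s)) ^ a r)"
      using iv C1 by simp
    then have "lt ((l r ^ a r) ^ b s) ((u s ^ b s) ^ a r)" using l u r s by simp
    then have "lt (l r ^ (a r * b s)) (u s ^ (a r * b s))" by (metis power_mult mult.commute)
    then show ?thesis using pow_strict_rev[of "l r" "u s" "a r * b s"] l[OF r] u[OF s] by blast
  qed
  have f1: "finite (l ` L)" "finite (u ` U)" using assms(1,2) by auto
  have s1: "l ` L \<subseteq> C" "u ` U \<subseteq> C" using l u by auto
  have a1: "\<forall>x\<in>l ` L. \<forall>y\<in>u ` U. lt x y" using lu by auto
  obtain z where z: "z \<in> C" "\<forall>x\<in>l ` L. lt x z" "\<forall>y\<in>u ` U. lt z y"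
    using interval[OF f1 s1 a1] by blast
  have 1: "lt (\<alpha> r) (\<beta> r * z ^ a r)" if r: "r \<in> L" for r
  proof -
    have C1: "\<alpha> r \<in> C" "\<beta> r \<in> C" "iv (\<beta> r) \<in> C" using La r iv by auto
    have "lt (l r) z" using z(2) r by auto
    then have lz: "lt (l r ^ a r) (z ^ a r)" using pow_strict[of "l r" z "a r"] l[OF r] z(1) La r by auto
    have "lt (l r ^ a r * \<beta> r) (z ^ a r * \<beta> r)"
      by (rule mono[OF _ _ C1(2) lz]) (use l r z pow_C mult_C C1 in auto)
    also have "l r ^ a r * \<beta> r = \<alpha> r" using l[OF r] iv[OF C1(2)] by (simp add: mult.assoc mult.commute[of "iv (\<beta> r)"])
    finally show ?thesis by (simp add: mult.commute)
  qed
  have 2: "lt (\<alpha> s * z ^ b s) (\<beta> s)" if s: "s \<in> U" for s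
  proof -
    have C1: "\<alpha> s \<in> C" "\<beta> s \<in> C" "iv (\<alpha> s) \<in> C" using Ub s iv by auto
    have "lt z (u s)" using z(3) s by auto
    then have zu: "lt (z ^ b s) (u s ^ b s)" using pow_strict[of z "u s" "b s"] u[OF s] z(1) Ub s by auto
    have "lt (z ^ b s * \<alpha> s) (u s ^ b s * \<alpha> s)"
      by (rule mono[OF _ _ C1(1) zu]) (use u s z pow_C mult_C C1 in auto)
    also have "u s ^ b s * \<alpha> s = \<beta> s" using u[OF s] iv[OF C1(1)] by (simp add: mult.assoc mult.commute[of "iv (\<alpha> s)"])
    finally show ?thesis by (simp add: mult.commute)
  qed
  show ?thesis using 1 2 z by blast
qed

end

definition cert :: "nat set \<Rightarrow> (nat \<Rightarrow> 'n \<Rightarrow> nat) \<Rightarrow> (nat \<Rightarrow> 'n \<Rightarrow> nat) \<Rightarrow> (nat \<Rightarrow> nat) \<Rightarrow> bool" where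
  "cert I p q t \<longleftrightarrow> (\<exists>r\<in>I. t r \<noteq> 0) \<and> (\<forall>j. (\<Sum>r\<in>I. t r * p r j) = (\<Sum>r\<in>I. t r * q r j))"

definition wt :: "(nat \<Rightarrow> 'n \<Rightarrow> nat) \<Rightarrow> (nat \<Rightarrow> 'n \<Rightarrow> nat) \<Rightarrow> 'n \<Rightarrow> nat \<Rightarrow> nat \<Rightarrow> nat" where
  "wt p q i k r' = (if even k then (if r' = k div 2 then 1 else 0) else
     (case prod_decode (k div 2) of (r,s) \<Rightarrow> (if r' = r then q s i - p s i else 0) + (if r' = s then p r i - q r i else 0)))"

lemma wt_even: "wt p q i (2*r0) r' = (if r' = r0 then 1 else 0)"
  by (simp add: wt_def)

lemma wt_code: "wt p q i (Suc (2*prod_encode (r,s))) r' = (if r' = r then q s i - p s i else 0) + (if r' = s then p r i - q r i else 0)"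
  by (simp add: wt_def)

lemma sum_wt_even: "finite I \<Longrightarrow> r0 \<in> I \<Longrightarrow> (\<Sum>r\<in>I. wt p q i (2*r0) r * f r) = f r0"
proof -
  assume a: "finite I" "r0 \<in> I"
  have "(\<Sum>r\<in>I. wt p q i (2*r0) r * f r) = (\<Sum>r\<in>I. if r = r0 then f r else 0)"
    by (rule sum.cong) (auto simp: wt_even)
  then show ?thesis using a by simp
qed

lemma prod_wt_even: "finite I \<Longrightarrow> r0 \<in> I \<Longrightarrow> (\<Prod>r\<in>I. (c r :: 'a::comm_monoid_mult) ^ wt p q i (2*r0) r) = c r0"
proof -
  assume a: "finite I" "r0 \<in> I"
  have "(\<Prod>r\<in>I. c r ^ wt p q i (2*r0) r) = (\<Prod>r\<in>I. if r = r0 then c r else 1)"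
    by (rule prod.cong) (auto simp: wt_even)
  then show ?thesis using a by simp
qed

lemma sum_wt_code: assumes "finite I" "r \<in> I" "s \<in> I" "r \<noteq> s"
  shows "(\<Sum>r'\<in>I. wt p q i (Suc (2*prod_encode (r,s))) r' * f r') = (q s i - p s i) * f r + (p r i - q r i) * f s"
proof -
  have "(\<Sum>r'\<in>I. wt p q i (Suc (2*prod_encode (r,s))) r' * f r') =
     (\<Sum>r'\<in>I. (if r' = r then (q s i - p s i) * f r' else 0)) + (\<Sum>r'\<in>I. (if r' = s then (p r i - q r i) * f r' else 0))"
    unfolding sum.distrib[symmetric] by (rule sum.cong) (auto simp: wt_code distrib_right)
  then show ?thesis using assms by simp
qed

lemma prod_wt_code: assumes "finite I" "r \<in> I" "s \<in> I" "r \<noteq> s"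
  shows "(\<Prod>r'\<in>I. (c r' :: 'a::comm_monoid_mult) ^ wt p q i (Suc (2*prod_encode (r,s))) r') = c r ^ (q s i - p s i) * c s ^ (p r i - q r i)"
proof -
  have "(\<Prod>r'\<in>I. c r' ^ wt p q i (Suc (2*prod_encode (r,s))) r') =
     (\<Prod>r'\<in>I. (if r' = r then c r' ^ (q s i - p s i) else 1)) * (\<Prod>r'\<in>I. (if r' = s then c r' ^ (p r i - q r i) else 1))"
    unfolding prod.distrib[symmetric] by (rule prod.cong) (auto simp: wt_code power_add)
  then show ?thesis using assms by simp
qed

lemma ball_img: "(\<forall>t\<in>f ` A. P t) = (\<forall>x\<in>A. P (f x))" by blast

context ogroup
begin

definition feas :: "nat set \<Rightarrow> (nat \<Rightarrow> 'n::finite \<Rightarrow> nat) \<Rightarrow> (nat \<Rightarrow> 'n \<Rightarrow> nat) \<Rightarrow> (nat \<Rightarrow> 'a) \<Rightarrow> (nat \<Rightarrow> 'a) \<Rightarrow> bool" where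
  "feas I p q c d \<longleftrightarrow> (\<exists>x. (\<forall>j. x j \<in> C) \<and> (\<forall>r\<in>I. lt (d r * mon x (q r)) (c r * mon x (p r))))"

definition FMP :: "nat set \<Rightarrow> (nat \<Rightarrow> 'n::finite \<Rightarrow> nat) \<Rightarrow> (nat \<Rightarrow> 'n \<Rightarrow> nat) \<Rightarrow> bool" where
  "FMP I p q \<longleftrightarrow> (\<exists>T. finite T \<and> (\<forall>t\<in>T. cert I p q t) \<and>
     (\<forall>c d. (\<forall>r\<in>I. c r \<in> C \<and> d r \<in> C) \<longrightarrow>
        (feas I p q c d \<longleftrightarrow> (\<forall>t\<in>T. lt (\<Prod>r\<in>I. d r ^ t r) (\<Prod>r\<in>I. c r ^ t r)))))"

lemma fm_base:
  fixes p q :: "nat \<Rightarrow> 'n::finite \<Rightarrow> nat"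
  assumes fin: "finite I" and z: "\<forall>r j. p r j = 0 \<and> q r j = 0"
  shows "FMP I p q"
proof -
  define T where "T = (\<lambda>r0 r. if r = r0 then 1 else 0::nat) ` I"
  have pz: "p r = (\<lambda>j. 0)" "q r = (\<lambda>j. 0)" for r using z by auto
  have fT: "finite T" using fin T_def by simp
  have cT: "\<forall>t\<in>T. cert I p q t"
    unfolding T_def cert_def using pz by auto
  have F: "feas I p q c d \<longleftrightarrow> (\<forall>t\<in>T. lt (\<Prod>r\<in>I. d r ^ t r) (\<Prod>r\<in>I. c r ^ t r))" for c d
  proof -
    have pr: "(\<Prod>r\<in>I. c r ^ (if r = r0 then 1 else 0)) = c r0" if "r0 \<in> I" for c :: "nat \<Rightarrow> 'a" and r0
    proof -
      have "(\<Prod>r\<in>I. c r ^ (if r = r0 then 1 else 0)) = (\<Prod>r\<in>I. if r = r0 then c r else 1)"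
        by (rule prod.cong) auto
      then show ?thesis using fin that by simp
    qed
    have "feas I p q c d \<longleftrightarrow> (\<forall>r\<in>I. lt (d r) (c r))"
      unfolding feas_def using pz one_C by (auto simp: mon_zero intro!: exI[of _ "\<lambda>j. 1"])
    also have "\<dots> \<longleftrightarrow> (\<forall>r0\<in>I. lt (\<Prod>r\<in>I. d r ^ (if r = r0 then 1 else 0)) (\<Prod>r\<in>I. c r ^ (if r = r0 then 1 else 0)))"
    proof (rule ball_cong[OF refl])
      fix r0 assume "r0 \<in> I"
      show "lt (d r0) (c r0) \<longleftrightarrow> lt (\<Prod>r\<in>I. d r ^ (if r = r0 then 1 else 0)) (\<Prod>r\<in>I. c r ^ (if r = r0 then 1 else 0))"
        by (simp only: pr[OF \<open>r0 \<in> I\<close>])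
    qed
    also have "\<dots> \<longleftrightarrow> (\<forall>t\<in>T. lt (\<Prod>r\<in>I. d r ^ t r) (\<Prod>r\<in>I. c r ^ t r))"
      unfolding T_def by (simp only: ball_img)
    finally show ?thesis .
  qed
  show ?thesis unfolding FMP_def using fT cT F by (intro exI[of _ T]) simp
qed

lemma fm_step:
  fixes p q :: "nat \<Rightarrow> 'n::finite \<Rightarrow> nat"
  assumes IH: "\<And>I (p :: nat \<Rightarrow> 'n \<Rightarrow> nat) q. finite I \<Longrightarrow> (\<forall>r j. j \<notin> D \<longrightarrow> p r j = 0 \<and> q r j = 0) \<Longrightarrow> FMP I p q"
  and iD: "i \<notin> D" and supp: "\<forall>r j. j \<notin> insert i D \<longrightarrow> p r j = 0 \<and> q r j = 0" and fin: "finite I"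
  shows "FMP I p q"
proof -
  define L where "L = {r\<in>I. q r i < p r i}"
  define U where "U = {r\<in>I. p r i < q r i}"
  define N where "N = {r\<in>I. p r i = q r i}"
  define w where "w = wt p q i"
  define cd where "cd r s = Suc (2 * prod_encode (r,s))" for r s
  define I' where "I' = (\<lambda>r. 2*r) ` N \<union> (\<lambda>(r,s). cd r s) ` (L \<times> U)"
  define P where "P k j = (\<Sum>r\<in>I. w k r * p r j)" for k j
  define Q where "Q k j = (\<Sum>r\<in>I. w k r * q r j)" for k j
  define p' where "p' k = (P k)(i:=0)" for k
  define q' where "q' k = (Q k)(i:=0)" for k
  define a where "a r = p r i - q r i" for r
  define b where "b s = q s i - p s i" for s
  have finLUN: "finite L" "finite U" "finite N" using fin by (auto simp: L_def U_def N_def)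
  have finI': "finite I'" using finLUN by (simp add: I'_def)
  have LI: "L \<subseteq> I" "U \<subseteq> I" "N \<subseteq> I" by (auto simp: L_def U_def N_def)
  have LUN: "I = L \<union> U \<union> N" by (auto simp: L_def U_def N_def)
  have LU: "r \<in> L \<Longrightarrow> s \<in> U \<Longrightarrow> r \<noteq> s" for r s by (auto simp: L_def U_def)
  have supp': "\<forall>k j. j \<notin> D \<longrightarrow> p' k j = 0 \<and> q' k j = 0"
  proof (intro allI impI)
    fix k j assume j: "j \<notin> D"
    show "p' k j = 0 \<and> q' k j = 0"
    proof (cases "j = i")
      case True then show ?thesis by (simp add: p'_def q'_def)
    next
      case False
      then have "j \<notin> insert i D" using j by auto
      then have "p r j = 0 \<and> q r j = 0" for r using supp by blast
      then show ?thesis using False by (simp add: p'_def q'_def P_def Q_def)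
    qed
  qed
  obtain T' where T'fin: "finite T'" and T'cert: "\<forall>t\<in>T'. cert I' p' q' t"
    and T'eq: "\<forall>c d. (\<forall>r\<in>I'. c r \<in> C \<and> d r \<in> C) \<longrightarrow>
        (feas I' p' q' c d \<longleftrightarrow> (\<forall>t\<in>T'. lt (\<Prod>r\<in>I'. d r ^ t r) (\<Prod>r\<in>I'. c r ^ t r)))"
    using IH[OF finI' supp'] unfolding FMP_def by blast
  define lift where "lift t r = (\<Sum>k\<in>I'. t k * w k r)" for t r
  have w_even: "w (2*r) r' = (if r' = r then 1 else 0)" for r r' by (simp add: w_def wt_even)
  have P_even: "P (2*r) = p r \<and> Q (2*r) = q r" if "r \<in> N" for r
  proof -
    have r: "r \<in> I" using that LI by auto
    show ?thesis
      by (intro conjI ext) (simp_all add: P_def Q_def w_def sum_wt_even[OF fin r])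
  qed
  have P_code: "P (cd r s) = (\<lambda>j. b s * p r j + a r * p s j) \<and> Q (cd r s) = (\<lambda>j. b s * q r j + a r * q s j)"
    if "r \<in> L" "s \<in> U" for r s
  proof -
    have r: "r \<in> I" "s \<in> I" using that LI by auto
    show ?thesis
      by (intro conjI ext) (simp_all add: P_def Q_def w_def cd_def a_def b_def sum_wt_code[OF fin r LU[OF that]])
  qed
  have w_code_r: "w (cd r s) r = b s" if "r \<in> L" "s \<in> U" for r s
    using LU[OF that] by (simp add: w_def cd_def wt_code b_def)
  have b_pos: "b s > 0" if "s \<in> U" for s using that by (simp add: b_def U_def)
  have a_pos: "a r > 0" if "r \<in> L" for r using that by (simp add: a_def L_def)
  have wpos: "\<exists>r\<in>I. w k r > 0" if "k \<in> I'" for k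
  proof -
    from that consider (n) r where "r \<in> N" "k = 2*r" | (c) r s where "r \<in> L" "s \<in> U" "k = cd r s"
      unfolding I'_def by auto
    then show ?thesis
    proof cases
      case n then show ?thesis using LI w_even by auto
    next
      case c then show ?thesis using LI w_code_r[OF c(1,2)] b_pos[OF c(2)] by (intro bexI[of _ r]) auto
    qed
  qed
  have PQi: "P k i = Q k i" if "k \<in> I'" for k
  proof -
    from that consider (n) r where "r \<in> N" "k = 2*r" | (c) r s where "r \<in> L" "s \<in> U" "k = cd r s"
      unfolding I'_def by auto
    then show ?thesis
    proof cases
      case n then show ?thesis using P_even by (simp add: N_def)
    next
      case c
      have 1: "p r i = q r i + a r" using c by (simp add: a_def L_def)
      have 2: "q s i = p s i + b s" using c by (simp add: b_def U_def)
      show ?thesis using c P_code 1 2 by (simp add: algebra_simps)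
    qed
  qed
  have sum_lift: "(\<Sum>r\<in>I. lift t r * f r j) = (\<Sum>k\<in>I'. t k * (\<Sum>r\<in>I. w k r * f r j))" for t f j
  proof -
    have "(\<Sum>r\<in>I. lift t r * f r j) = (\<Sum>r\<in>I. \<Sum>k\<in>I'. t k * (w k r * f r j))"
      by (simp add: lift_def sum_distrib_right mult.assoc)
    also have "\<dots> = (\<Sum>k\<in>I'. \<Sum>r\<in>I. t k * (w k r * f r j))" by (rule sum.swap)
    also have "\<dots> = (\<Sum>k\<in>I'. t k * (\<Sum>r\<in>I. w k r * f r j))" by (simp add: sum_distrib_left)
    finally show ?thesis .
  qed
  have prod_lift: "(\<Prod>r\<in>I. c r ^ lift t r) = (\<Prod>k\<in>I'. (\<Prod>r\<in>I. c r ^ w k r) ^ t k)" for t and c :: "nat \<Rightarrow> 'a"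
  proof -
    have "(\<Prod>r\<in>I. c r ^ lift t r) = (\<Prod>r\<in>I. \<Prod>k\<in>I'. c r ^ (w k r * t k))"
      by (simp add: lift_def power_sum mult.commute)
    also have "\<dots> = (\<Prod>k\<in>I'. \<Prod>r\<in>I. c r ^ (w k r * t k))" by (rule prod.swap)
    also have "\<dots> = (\<Prod>k\<in>I'. (\<Prod>r\<in>I. c r ^ w k r) ^ t k)" by (simp add: prod_pow_distrib power_mult)
    finally show ?thesis .
  qed
  have cert_lift: "cert I p q (lift t)" if t: "t \<in> T'" for t
  proof -
    have ct: "cert I' p' q' t" using T'cert t by blast
    then obtain k where k: "k \<in> I'" "t k \<noteq> 0" unfolding cert_def by blast
    obtain r where r: "r \<in> I" "w k r > 0" using wpos[OF k(1)] by blast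
    have "lift t r \<ge> t k * w k r" unfolding lift_def by (rule member_le_sum[where f="\<lambda>k. t k * w k r", OF k(1)]) (use finI' in auto)
    then have "lift t r \<noteq> 0" using k r by (metis mult_is_0 not_gr0 le_zero_eq)
    moreover have "(\<Sum>r\<in>I. lift t r * p r j) = (\<Sum>r\<in>I. lift t r * q r j)" for j
    proof (cases "j = i")
      case True
      have "(\<Sum>k\<in>I'. t k * P k j) = (\<Sum>k\<in>I'. t k * Q k j)"
        using PQi True by (intro sum.cong) auto
      then show ?thesis using sum_lift[of t p j] sum_lift[of t q j] by (simp add: P_def Q_def)
    next
      case False
      have "(\<Sum>k\<in>I'. t k * p' k j) = (\<Sum>k\<in>I'. t k * q' k j)" using ct unfolding cert_def by blast
      then show ?thesis using False sum_lift[of t p j] sum_lift[of t q j] by (simp add: p'_def q'_def P_def Q_def)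
    qed
    ultimately show ?thesis unfolding cert_def using r by blast
  qed
  have feas_iff: "feas I p q c d \<longleftrightarrow> feas I' p' q' (\<lambda>k. \<Prod>r\<in>I. c r ^ w k r) (\<lambda>k. \<Prod>r\<in>I. d r ^ w k r)"
    if cdC: "\<forall>r\<in>I. c r \<in> C \<and> d r \<in> C" for c d
  proof
    assume "feas I p q c d"
    then obtain x where xC: "\<forall>j. x j \<in> C" and xr: "\<forall>r\<in>I. lt (d r * mon x (q r)) (c r * mon x (p r))"
      unfolding feas_def by blast
    show "feas I' p' q' (\<lambda>k. \<Prod>r\<in>I. c r ^ w k r) (\<lambda>k. \<Prod>r\<in>I. d r ^ w k r)" unfolding feas_def
    proof (intro exI[of _ x] conjI ballI)
      show "\<forall>j. x j \<in> C" by (rule xC)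
      fix k assume k: "k \<in> I'"
      define A where "A r = c r * mon x (p r)" for r
      define B where "B r = d r * mon x (q r)" for r
      obtain r0 where r0: "r0 \<in> I" "w k r0 > 0" using wpos[OF k] by blast
      have ABC: "A r \<in> C \<and> B r \<in> C \<and> lt (B r) (A r)" if "r \<in> I" for r
        using that cdC xr xC by (auto simp: A_def B_def intro!: mult_C mon_C)
      have AB: "lt (\<Prod>r\<in>I. B r ^ w k r) (\<Prod>r\<in>I. A r ^ w k r)"
        by (rule prod_pow_strict[where w="w k", OF fin ABC r0])
      have mP: "(\<Prod>r\<in>I. mon x (f r) ^ w k r) = mon x (f' k) * x i ^ F k i"
        if "F = (\<lambda>k j. \<Sum>r\<in>I. w k r * f r j)" "f' = (\<lambda>k. (F k)(i:=0))" for F f f'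
      proof -
        have "(\<Prod>r\<in>I. mon x (f r) ^ w k r) = mon x (F k)" using mon_sum[OF fin, of x "w k" f] that by simp
        also have "\<dots> = mon x (f' k) * x i ^ F k i" using that mon_split by simp
        finally show ?thesis .
      qed
      have eqA: "(\<Prod>r\<in>I. A r ^ w k r) = ((\<Prod>r\<in>I. c r ^ w k r) * mon x (p' k)) * x i ^ P k i"
      proof -
        have "(\<Prod>r\<in>I. A r ^ w k r) = (\<Prod>r\<in>I. c r ^ w k r) * (\<Prod>r\<in>I. mon x (p r) ^ w k r)"
          by (simp add: A_def power_mult_distrib prod.distrib)
        also have "(\<Prod>r\<in>I. mon x (p r) ^ w k r) = mon x (p' k) * x i ^ P k i"
          by (rule mP) (simp_all add: fun_eq_iff P_def p'_def)
        finally show ?thesis by (simp add: mult.assoc)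
      qed
      have eqB: "(\<Prod>r\<in>I. B r ^ w k r) = ((\<Prod>r\<in>I. d r ^ w k r) * mon x (q' k)) * x i ^ P k i"
      proof -
        have "(\<Prod>r\<in>I. B r ^ w k r) = (\<Prod>r\<in>I. d r ^ w k r) * (\<Prod>r\<in>I. mon x (q r) ^ w k r)"
          by (simp add: B_def power_mult_distrib prod.distrib)
        also have "(\<Prod>r\<in>I. mon x (q r) ^ w k r) = mon x (q' k) * x i ^ Q k i"
          by (rule mP) (simp_all add: fun_eq_iff Q_def q'_def)
        finally show ?thesis using PQi[OF k] by (simp add: mult.assoc)
      qed
      have Cs: "(\<Prod>r\<in>I. c r ^ w k r) * mon x (p' k) \<in> C" "(\<Prod>r\<in>I. d r ^ w k r) * mon x (q' k) \<in> C"
        "x i ^ P k i \<in> C"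
        using cdC xC by (auto intro!: mult_C prod_C pow_C mon_C)
      show "lt ((\<Prod>r\<in>I. d r ^ w k r) * mon x (q' k)) ((\<Prod>r\<in>I. c r ^ w k r) * mon x (p' k))"
        using cancel[OF Cs(2) Cs(1) Cs(3)] AB eqA eqB by simp
    qed
  next
    assume "feas I' p' q' (\<lambda>k. \<Prod>r\<in>I. c r ^ w k r) (\<lambda>k. \<Prod>r\<in>I. d r ^ w k r)"
    then obtain x' where x'C: "\<forall>j. x' j \<in> C"
      and x'r: "\<forall>k\<in>I'. lt ((\<Prod>r\<in>I. d r ^ w k r) * mon x' (q' k)) ((\<Prod>r\<in>I. c r ^ w k r) * mon x' (p' k))"
      unfolding feas_def by blast
    define \<alpha> where "\<alpha> r = d r * mon x' ((q r)(i:=0))" for r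
    define \<beta> where "\<beta> r = c r * mon x' ((p r)(i:=0))" for r
    have abC: "\<alpha> r \<in> C \<and> \<beta> r \<in> C" if "r \<in> I" for r
      using that cdC x'C by (auto simp: \<alpha>_def \<beta>_def intro!: mult_C mon_C)
    have hN: "lt (\<alpha> r) (\<beta> r)" if r: "r \<in> N" for r
    proof -
      have rI: "r \<in> I" using r LI by auto
      have k: "2*r \<in> I'" using r by (simp add: I'_def)
      have "(\<Prod>r'\<in>I. c r' ^ w (2*r) r') = c r" "(\<Prod>r'\<in>I. d r' ^ w (2*r) r') = d r"
        using prod_wt_even[OF fin rI] by (simp_all add: w_def)
      moreover have "p' (2*r) = (p r)(i:=0)" "q' (2*r) = (q r)(i:=0)"
        using P_even[OF r] by (simp_all add: p'_def q'_def)
      moreover have "lt ((\<Prod>r'\<in>I. d r' ^ w (2*r) r') * mon x' (q' (2*r))) ((\<Prod>r'\<in>I. c r' ^ w (2*r) r') * mon x' (p' (2*r)))"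
        using x'r k by blast
      ultimately show ?thesis by (simp add: \<alpha>_def \<beta>_def)
    qed
    have hLU: "lt (\<alpha> r ^ b s * \<alpha> s ^ a r) (\<beta> r ^ b s * \<beta> s ^ a r)" if rs: "r \<in> L" "s \<in> U" for r s
    proof -
      have rI: "r \<in> I" "s \<in> I" using rs LI by auto
      have k: "cd r s \<in> I'" using rs by (force simp: I'_def)
      have cc: "(\<Prod>r'\<in>I. c r' ^ w (cd r s) r') = c r ^ b s * c s ^ a r"
        "(\<Prod>r'\<in>I. d r' ^ w (cd r s) r') = d r ^ b s * d s ^ a r"
        using prod_wt_code[OF fin rI LU[OF rs]] by (simp_all add: w_def cd_def a_def b_def)
      have pp: "p' (cd r s) = (\<lambda>j. b s * ((p r)(i:=0)) j + a r * ((p s)(i:=0)) j)"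
        "q' (cd r s) = (\<lambda>j. b s * ((q r)(i:=0)) j + a r * ((q s)(i:=0)) j)"
        using P_code[OF rs] by (auto simp: p'_def q'_def)
      have mm: "mon x' (p' (cd r s)) = mon x' ((p r)(i:=0)) ^ b s * mon x' ((p s)(i:=0)) ^ a r"
        "mon x' (q' (cd r s)) = mon x' ((q r)(i:=0)) ^ b s * mon x' ((q s)(i:=0)) ^ a r"
        by (simp_all only: pp mon_add mon_mult)
      have e1: "(c r ^ b s * c s ^ a r) * (mon x' ((p r)(i:=0)) ^ b s * mon x' ((p s)(i:=0)) ^ a r) = \<beta> r ^ b s * \<beta> s ^ a r"
        by (simp add: \<beta>_def power_mult_distrib mult_ac)
      have e2: "(d r ^ b s * d s ^ a r) * (mon x' ((q r)(i:=0)) ^ b s * mon x' ((q s)(i:=0)) ^ a r) = \<alpha> r ^ b s * \<alpha> s ^ a r"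
        by (simp add: \<alpha>_def power_mult_distrib mult_ac)
      have "lt ((\<Prod>r'\<in>I. d r' ^ w (cd r s) r') * mon x' (q' (cd r s))) ((\<Prod>r'\<in>I. c r' ^ w (cd r s) r') * mon x' (p' (cd r s)))"
        using x'r k by blast
      then show ?thesis unfolding cc mm e1 e2 .
    qed
    obtain z where zC: "z \<in> C" and zL: "\<forall>r\<in>L. lt (\<alpha> r) (\<beta> r * z ^ a r)" and zU: "\<forall>s\<in>U. lt (\<alpha> s * z ^ b s) (\<beta> s)"
      using sep[OF finLUN(1,2), of a \<alpha> \<beta> b] a_pos b_pos abC LI hLU by blast
    define x where "x = x'(i:=z)"
    show "feas I p q c d" unfolding feas_def
    proof (intro exI[of _ x] conjI ballI)
      show "\<forall>j. x j \<in> C" using x'C zC by (simp add: x_def)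
      fix r assume r: "r \<in> I"
      have mx: "c r * mon x (p r) = \<beta> r * z ^ p r i" "d r * mon x (q r) = \<alpha> r * z ^ q r i"
        by (simp_all add: x_def mon_upd \<alpha>_def \<beta>_def mult.assoc)
      have zz: "z ^ n \<in> C" for n using zC pow_C by blast
      have rC: "\<alpha> r \<in> C" "\<beta> r \<in> C" using abC[OF r] by auto
      have "lt (\<alpha> r * z ^ q r i) (\<beta> r * z ^ p r i)"
      proof -
        consider "r \<in> N" | "r \<in> L" | "r \<in> U" using r LUN by blast
        then show ?thesis
        proof cases
          case 1
          then have "p r i = q r i" by (simp add: N_def)
          then show ?thesis using mono[OF rC zz hN[OF 1]] by simp
        next
          case 2
          then have e: "p r i = a r + q r i" by (simp add: a_def L_def)
          have "lt (\<alpha> r * z ^ q r i) ((\<beta> r * z ^ a r) * z ^ q r i)"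
            using mono[OF rC(1) _ zz] zL 2 rC mult_C zz by blast
          then show ?thesis using e by (simp add: power_add mult.assoc)
        next
          case 3
          then have e: "q r i = b r + p r i" by (simp add: b_def U_def)
          have "lt ((\<alpha> r * z ^ b r) * z ^ p r i) (\<beta> r * z ^ p r i)"
            using mono[OF _ rC(2) zz] zU 3 rC mult_C zz by blast
          then show ?thesis using e by (simp add: power_add mult.assoc)
        qed
      qed
      then show "lt (d r * mon x (q r)) (c r * mon x (p r))" unfolding mx .
    qed
  qed
  define T where "T = lift ` T'"
  have F: "feas I p q c d \<longleftrightarrow> (\<forall>t\<in>T. lt (\<Prod>r\<in>I. d r ^ t r) (\<Prod>r\<in>I. c r ^ t r))"
    if cdC: "\<forall>r\<in>I. c r \<in> C \<and> d r \<in> C" for c d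
  proof -
    have C': "\<forall>k\<in>I'. (\<Prod>r\<in>I. c r ^ w k r) \<in> C \<and> (\<Prod>r\<in>I. d r ^ w k r) \<in> C"
      using cdC by (auto intro!: prod_C pow_C)
    have "feas I p q c d \<longleftrightarrow> feas I' p' q' (\<lambda>k. \<Prod>r\<in>I. c r ^ w k r) (\<lambda>k. \<Prod>r\<in>I. d r ^ w k r)"
      by (rule feas_iff[OF cdC])
    also have "\<dots> \<longleftrightarrow> (\<forall>t\<in>T'. lt (\<Prod>k\<in>I'. (\<Prod>r\<in>I. d r ^ w k r) ^ t k) (\<Prod>k\<in>I'. (\<Prod>r\<in>I. c r ^ w k r) ^ t k))"
      using T'eq C' by simp
    also have "\<dots> \<longleftrightarrow> (\<forall>t\<in>T'. lt (\<Prod>r\<in>I. d r ^ lift t r) (\<Prod>r\<in>I. c r ^ lift t r))"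
      by (simp only: prod_lift)
    also have "\<dots> \<longleftrightarrow> (\<forall>t\<in>T. lt (\<Prod>r\<in>I. d r ^ t r) (\<Prod>r\<in>I. c r ^ t r))"
      unfolding T_def by (simp only: ball_img)
    finally show ?thesis .
  qed
  have fT: "finite T" using T'fin T_def by simp
  have cT: "\<forall>t\<in>T. cert I p q t" using cert_lift T_def by blast
  show ?thesis unfolding FMP_def using fT cT F by (intro exI[of _ T]) simp
qed

lemma fm_D:
  fixes D :: "'n::finite set"
  shows "finite D \<Longrightarrow> \<forall>I (p :: nat \<Rightarrow> 'n \<Rightarrow> nat) q. finite I \<longrightarrow> (\<forall>r j. j \<notin> D \<longrightarrow> p r j = 0 \<and> q r j = 0) \<longrightarrow> FMP I p q"
proof (induction D rule: finite_induct)
  case empty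
  then show ?case using fm_base by blast
next
  case (insert i D)
  show ?case
  proof (intro allI impI)
    fix I :: "nat set" and p q :: "nat \<Rightarrow> 'n \<Rightarrow> nat"
    assume "finite I" "\<forall>r j. j \<notin> insert i D \<longrightarrow> p r j = 0 \<and> q r j = 0"
    then show "FMP I p q" using fm_step[of D i p q I] insert by blast
  qed
qed

lemma fm:
  fixes p q :: "nat \<Rightarrow> 'n::finite \<Rightarrow> nat"
  shows "finite I \<Longrightarrow> FMP I p q"
  using fm_D[of "UNIV :: 'n set"] by simp

end

lemma add_idem_qf: "(a::'a::qfield1) + a = a"
proof -
  have "a + a = a * (1 + 1)" by (simp only: distrib_left mult_1_right)
  also have "\<dots> = a" by (simp only: one_plus_one_qf mult_1_right)
  finally show ?thesis .
qed

lemma qf_refl: "qf_le (a::'a::qfield1) a" by (simp add: qf_le_def add_idem_qf)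

lemma qf_antisym: "qf_le (a::'a::qfield1) b \<Longrightarrow> qf_le b a \<Longrightarrow> a = b"
  by (simp add: qf_le_def add.commute)

lemma qf_trans: "qf_le (a::'a::qfield1) b \<Longrightarrow> qf_le b c \<Longrightarrow> qf_le a c"
  unfolding qf_le_def
proof -
  assume h: "a + b = b" "b + c = c"
  have "a + c = a + (b + c)" using h by simp
  also have "\<dots> = (a + b) + c" by (simp add: add.assoc)
  finally show "a + c = c" using h by simp
qed

lemma qf_zero_le: "qf_le 0 (a::'a::qfield1)" by (simp add: qf_le_def)

lemma qf_le_zero: "qf_le (a::'a::qfield1) 0 \<Longrightarrow> a = 0" by (simp add: qf_le_def)

lemma qf_le_add1: "qf_le (a::'a::qfield1) (a + b)"
  unfolding qf_le_def by (simp add: add.assoc[symmetric] add_idem_qf)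

lemma qf_le_add2: "qf_le (b::'a::qfield1) (a + b)"
  using qf_le_add1[of b a] by (simp add: add.commute)

lemma qf_add_le: "qf_le (a::'a::qfield1) c \<Longrightarrow> qf_le b c \<Longrightarrow> qf_le (a + b) c"
  unfolding qf_le_def
proof -
  assume h: "a + c = c" "b + c = c"
  have "a + b + c = a + (b + c)" by (simp add: add.assoc)
  then show "a + b + c = c" using h by simp
qed

lemma qf_mult_mono: "qf_le (a::'a::qfield1) b \<Longrightarrow> qf_le (a * c) (b * c)"
  unfolding qf_le_def by (simp add: distrib_right[symmetric])

lemma qf_mult_mono2: "qf_le (a::'a::qfield1) b \<Longrightarrow> qf_le c d \<Longrightarrow> qf_le (a * c) (b * d)"
proof -
  assume h: "qf_le a b" "qf_le c d"
  have "qf_le (a * c) (b * c)" using qf_mult_mono[OF h(1)] .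
  moreover have "qf_le (c * b) (d * b)" using qf_mult_mono[OF h(2)] .
  ultimately show ?thesis using qf_trans by (simp add: mult.commute)
qed

lemma qf_inv: "(a::'a::qfield1) \<noteq> 0 \<Longrightarrow> \<exists>b. b \<noteq> 0 \<and> a * b = 1"
proof -
  assume a: "a \<noteq> 0"
  obtain b where b: "a * b = 1" using mult_inv_ex_qf[OF a] by blast
  have "b \<noteq> 0" using b by (metis mult_zero_right zero_neq_one)
  then show ?thesis using b by blast
qed

lemma qf_nzd: "(a::'a::qfield1) \<noteq> 0 \<Longrightarrow> b \<noteq> 0 \<Longrightarrow> a * b \<noteq> 0"
proof
  assume h: "a \<noteq> 0" "b \<noteq> 0" "a * b = 0"
  obtain a' where a': "a * a' = 1" using mult_inv_ex_qf h(1) by blast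
  have "b = (a * a') * b" using a' by simp
  also have "\<dots> = a' * (a * b)" by (simp add: ac_simps)
  finally show False using h by simp
qed

lemma qf_cancel: "(c::'a::qfield1) \<noteq> 0 \<Longrightarrow> a * c = b * c \<Longrightarrow> a = b"
proof -
  assume h: "c \<noteq> 0" "a * c = b * c"
  obtain c' where c': "c * c' = 1" using mult_inv_ex_qf h(1) by blast
  have "a = (a * c) * c'" using c' by (simp add: mult.assoc)
  also have "\<dots> = (b * c) * c'" using h by simp
  also have "\<dots> = b" using c' by (simp add: mult.assoc)
  finally show ?thesis .
qed

lemma qf_pow_nz: "(a::'a::qfield1) \<noteq> 0 \<Longrightarrow> a ^ n \<noteq> 0"
  by (induction n) (auto simp: qf_nzd)

lemma qf_prod_nz: "(\<And>x. x \<in> A \<Longrightarrow> f x \<noteq> (0::'a::qfield1)) \<Longrightarrow> prod f A \<noteq> 0"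
  by (induction A rule: infinite_finite_induct) (auto simp: qf_nzd)

lemma qf_sum_le: "finite S \<Longrightarrow> (\<And>s. s \<in> S \<Longrightarrow> qf_le (f s) (z::'a::qfield1)) \<Longrightarrow> qf_le (sum f S) z"
  by (induction S rule: finite_induct) (auto simp: qf_zero_le qf_add_le)

lemma qf_le_sum: "finite S \<Longrightarrow> s \<in> S \<Longrightarrow> qf_le (f s) (sum f S :: 'a::qfield1)"
proof (induction S rule: finite_induct)
  case empty then show ?case by simp
next
  case (insert x F)
  show ?case
  proof (cases "s = x")
    case True then show ?thesis using insert qf_le_add1 by simp
  next
    case False
    then have "qf_le (f s) (sum f F)" using insert by simp
    then show ?thesis using insert qf_le_add2[of "sum f F" "f x"] qf_trans[of "f s" "sum f F"] by simp
  qed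
qed

lemma qf_sum_attained:
  assumes tot: "qf_total TYPE('a::qfield1)"
  shows "finite S \<Longrightarrow> S \<noteq> {} \<Longrightarrow> \<exists>s\<in>S. sum f S = (f s :: 'a)"
proof (induction S rule: finite_ne_induct)
  case (singleton x) then show ?case by simp
next
  case (insert x F)
  then obtain s where s: "s \<in> F" "sum f F = f s" by auto
  have "qf_le (f x) (f s) \<or> qf_le (f s) (f x)" using tot unfolding qf_total_def by blast
  then show ?case
  proof
    assume "qf_le (f x) (f s)"
    then have "f x + f s = f s" by (simp add: qf_le_def)
    then show ?case using insert s by auto
  next
    assume "qf_le (f s) (f x)"
    then have "f x + f s = f x" by (simp add: qf_le_def add.commute)
    then show ?case using insert s by auto
  qed
qed

definition ltK :: "'a::qfield1 \<Rightarrow> 'a \<Rightarrow> bool" where "ltK a b \<longleftrightarrow> qf_le a b \<and> a \<noteq> b"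

lemma qf_not_le: "qf_total TYPE('a::qfield1) \<Longrightarrow> \<not> qf_le (a::'a) b \<Longrightarrow> ltK b a"
proof -
  assume h: "qf_total TYPE('a)" "\<not> qf_le a b"
  then have "qf_le b a" unfolding qf_total_def by blast
  moreover have "b \<noteq> a" using h(2) qf_refl by blast
  ultimately show ?thesis by (simp add: ltK_def)
qed

lemma qf_root:
  assumes ac: "qf_alg_closed TYPE('a::qfield1)" and a: "(a::'a) \<noteq> 0" and n: "n > 0"
  shows "\<exists>r. r \<noteq> 0 \<and> r ^ n = a"
proof -
  define p where "p k = (if k = n then 1 else if k = 0 then a else 0)" for k
  have S: "{k. p k \<noteq> 0} = {0, n}" using a n by (auto simp: p_def)
  have "finite {k. p k \<noteq> 0} \<and> (\<exists>k>0. p k \<noteq> 0)" using S n by (auto simp: p_def)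
  then obtain x where x: "upoly_root p x" using ac unfolding qf_alg_closed_def by blast
  have ev: "upoly_eval p x = a + x ^ n" using n unfolding upoly_eval_def S by (simp add: p_def)
  have "x ^ n = a"
  proof (cases "upoly_eval p x = 0")
    case True
    then have "qf_le a 0" using ev qf_le_add1[of a "x^n"] by simp
    then show ?thesis using qf_le_zero a by blast
  next
    case False
    then obtain k1 k2 where k: "k1 \<noteq> k2" "p k1 \<noteq> 0" "p k2 \<noteq> 0" "p k1 * x ^ k1 = upoly_eval p x" "p k2 * x ^ k2 = upoly_eval p x"
      using x unfolding upoly_root_def by blast
    have "k1 \<in> {0,n}" "k2 \<in> {0,n}" using k S by auto
    then have "{k1,k2} = {0,n}" using k(1) by auto
    then have "p 0 * x ^ 0 = p n * x ^ n" using k by (metis doubleton_eq_iff)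
    then show ?thesis using n by (simp add: p_def)
  qed
  moreover have "x \<noteq> 0" using \<open>x ^ n = a\<close> a n by (metis power_0_left not_gr0)
  ultimately show ?thesis by blast
qed

lemma K_ogroup:
  assumes tot: "qf_total TYPE('a::qfield1)" and ac: "qf_alg_closed TYPE('a)" and inf: "infinite (UNIV :: 'a set)"
  shows "ogroup {x::'a. x \<noteq> 0} ltK"
proof
  show "(1::'a) \<in> {x. x \<noteq> 0}" by simp
  show "\<And>a b. a \<in> {x::'a. x \<noteq> 0} \<Longrightarrow> b \<in> {x. x \<noteq> 0} \<Longrightarrow> a * b \<in> {x. x \<noteq> 0}" by (simp add: qf_nzd)
  show "\<And>a. a \<in> {x::'a. x \<noteq> 0} \<Longrightarrow> \<exists>b\<in>{x. x \<noteq> 0}. a * b = 1" using qf_inv by auto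
  show "\<And>a::'a. \<not> ltK a a" by (simp add: ltK_def)
  have "\<And>a b c::'a. ltK a b \<Longrightarrow> ltK b c \<Longrightarrow> ltK a c"
  proof -
    fix a b c :: 'a assume h: "ltK a b" "ltK b c"
    have "qf_le a c" using h qf_trans unfolding ltK_def by blast
    moreover have "a \<noteq> c"
    proof
      assume "a = c"
      then have "qf_le c b" using h unfolding ltK_def by simp
      then show False using h qf_antisym unfolding ltK_def by blast
    qed
    ultimately show "ltK a c" by (simp add: ltK_def)
  qed
  then show "\<And>a b c::'a. a \<in> {x. x \<noteq> 0} \<Longrightarrow> b \<in> {x. x \<noteq> 0} \<Longrightarrow> c \<in> {x. x \<noteq> 0} \<Longrightarrow> ltK a b \<Longrightarrow> ltK b c \<Longrightarrow> ltK a c" by blast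
  show "\<And>a b::'a. a \<in> {x. x \<noteq> 0} \<Longrightarrow> b \<in> {x. x \<noteq> 0} \<Longrightarrow> a \<noteq> b \<Longrightarrow> ltK a b \<or> ltK b a"
    using tot unfolding qf_total_def ltK_def by blast
  show "\<And>a b c::'a. a \<in> {x. x \<noteq> 0} \<Longrightarrow> b \<in> {x. x \<noteq> 0} \<Longrightarrow> c \<in> {x. x \<noteq> 0} \<Longrightarrow> ltK a b \<Longrightarrow> ltK (a * c) (b * c)"
  proof -
    fix a b c :: 'a assume h: "c \<in> {x. x \<noteq> 0}" "ltK a b"
    then have "qf_le (a * c) (b * c)" using qf_mult_mono unfolding ltK_def by blast
    moreover have "a * c \<noteq> b * c" using h qf_cancel[of c a b] unfolding ltK_def by auto
    ultimately show "ltK (a * c) (b * c)" by (simp add: ltK_def)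
  qed
  show "\<And>a n. a \<in> {x::'a. x \<noteq> 0} \<Longrightarrow> 0 < n \<Longrightarrow> \<exists>r\<in>{x. x \<noteq> 0}. r ^ n = a"
    using qf_root[OF ac] by auto
  show "\<exists>g\<in>{x::'a. x \<noteq> 0}. ltK 1 g"
  proof -
    have "UNIV \<noteq> {0, 1::'a}" using inf by (metis finite.emptyI finite_insert)
    then obtain g :: 'a where g: "g \<notin> {0, 1}" by blast
    then have g0: "g \<noteq> 0" "g \<noteq> 1" by auto
    show ?thesis
    proof (cases "qf_le 1 g")
      case True then show ?thesis using g0 by (auto simp: ltK_def)
    next
      case False
      then have lg: "qf_le g 1" using tot unfolding qf_total_def by blast
      obtain h where h: "h \<noteq> 0" "g * h = 1" using qf_inv g0 by blast
      have "qf_le 1 h"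
      proof (rule ccontr)
        assume "\<not> qf_le 1 h"
        then have "qf_le h 1" using tot unfolding qf_total_def by blast
        then have "qf_le (g * h) (g * 1)" using qf_mult_mono[of h 1 g] by (simp add: mult.commute)
        then have "qf_le 1 g" using h by simp
        then show False using False by simp
      qed
      moreover have "h \<noteq> 1" using h g0 by auto
      ultimately show ?thesis using h by (auto simp: ltK_def)
    qed
  qed
qed

lemma R_ogroup: "ogroup {x::real. x > 0} (<)"
proof
  show "\<And>a. a \<in> {x::real. x > 0} \<Longrightarrow> \<exists>b\<in>{x. x > 0}. a * b = 1"
    by (intro bexI[of _ "1 / _"]) auto
  show "\<And>a n. a \<in> {x::real. x > 0} \<Longrightarrow> 0 < n \<Longrightarrow> \<exists>r\<in>{x. x > 0}. r ^ n = a"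
  proof -
    fix a :: real and n :: nat assume "a \<in> {x. x > 0}" "0 < n"
    then show "\<exists>r\<in>{x. x > 0}. r ^ n = a" by (intro bexI[of _ "root n a"]) (auto simp: real_root_pow_pos)
  qed
  show "\<exists>g\<in>{x::real. x > 0}. 1 < g" by (intro bexI[of _ 2]) auto
qed auto


lemma peval_mon: "peval P x = (\<Sum>\<alpha>\<in>supp_poly P. P \<alpha> * mon x \<alpha>)"
  by (simp add: peval_def mon_def)

lemma mon_nz: "(\<And>j. x j \<noteq> 0) \<Longrightarrow> mon x f \<noteq> (0::'a::qfield1)"
  unfolding mon_def by (rule qf_prod_nz) (simp add: qf_pow_nz)

lemma cand_nz:
  assumes "y \<in> conv_cands P \<gamma>"
  shows "y \<noteq> 0"
proof -
  obtain m c where mc: "m \<ge> 1" "y ^ m = (\<Prod>\<alpha>\<in>supp_poly P. P \<alpha> ^ c \<alpha>)"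
    using assms unfolding conv_cands_def by blast
  have "(\<Prod>\<alpha>\<in>supp_poly P. P \<alpha> ^ c \<alpha>) \<noteq> 0"
    by (rule qf_prod_nz) (simp add: qf_pow_nz supp_poly_def)
  then show ?thesis using mc by (metis power_0_left not_one_le_zero)
qed

lemma mon_cands:
  fixes x :: "'n::finite \<Rightarrow> 'a::qfield1"
  assumes fin: "finite (supp_poly P)" and c1: "(\<Sum>\<alpha>\<in>supp_poly P. c \<alpha>) = m"
    and c2: "\<forall>i. (\<Sum>\<alpha>\<in>supp_poly P. c \<alpha> * \<alpha> i) = m * \<gamma> i"
    and y: "y ^ m = (\<Prod>\<alpha>\<in>supp_poly P. P \<alpha> ^ c \<alpha>)"
  shows "(\<Prod>\<alpha>\<in>supp_poly P. (P \<alpha> * mon x \<alpha>) ^ c \<alpha>) = (y * mon x \<gamma>) ^ m"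
proof -
  have "(\<Prod>\<alpha>\<in>supp_poly P. (P \<alpha> * mon x \<alpha>) ^ c \<alpha>) = (\<Prod>\<alpha>\<in>supp_poly P. P \<alpha> ^ c \<alpha>) * (\<Prod>\<alpha>\<in>supp_poly P. mon x \<alpha> ^ c \<alpha>)"
    by (simp add: power_mult_distrib prod.distrib)
  also have "(\<Prod>\<alpha>\<in>supp_poly P. mon x \<alpha> ^ c \<alpha>) = mon x (\<lambda>j. \<Sum>\<alpha>\<in>supp_poly P. c \<alpha> * \<alpha> j)"
    using mon_sum[OF fin, of x c "\<lambda>\<alpha>. \<alpha>"] by simp
  also have "\<dots> = mon x (\<lambda>j. m * \<gamma> j)" using c2 by simp
  also have "\<dots> = mon x \<gamma> ^ m" by (rule mon_mult)
  finally show ?thesis using y by (simp add: power_mult_distrib)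
qed

lemma cand_infeasible:
  fixes P :: "('n::finite \<Rightarrow> nat) \<Rightarrow> 'a::qfield1"
  assumes tot: "qf_total TYPE('a)" and ac: "qf_alg_closed TYPE('a)" and inf: "infinite (UNIV :: 'a set)"
    and fin: "finite (supp_poly P)" and y: "y \<in> conv_cands P \<gamma>" and x: "\<forall>j. x j \<noteq> 0"
  shows "\<not> (\<forall>\<alpha>\<in>supp_poly P. ltK (P \<alpha> * mon x \<alpha>) (y * mon x \<gamma>))"
proof
  assume H: "\<forall>\<alpha>\<in>supp_poly P. ltK (P \<alpha> * mon x \<alpha>) (y * mon x \<gamma>)"
  interpret K: ogroup "{x::'a. x \<noteq> 0}" ltK by (rule K_ogroup[OF tot ac inf])
  obtain m c where mc: "m \<ge> 1" "(\<Sum>\<alpha>\<in>supp_poly P. c \<alpha>) = m" "\<forall>i. (\<Sum>\<alpha>\<in>supp_poly P. c \<alpha> * \<alpha> i) = m * \<gamma> i"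
    "y ^ m = (\<Prod>\<alpha>\<in>supp_poly P. P \<alpha> ^ c \<alpha>)"
    using y unfolding conv_cands_def by blast
  obtain \<alpha>0 where a0: "\<alpha>0 \<in> supp_poly P" "c \<alpha>0 > 0"
    using mc(1,2) by (metis not_one_le_zero not_gr0 sum.neutral)
  have y0: "y \<noteq> 0" using cand_nz[OF y] .
  have mnz: "mon x f \<noteq> 0" for f using mon_nz x by blast
  have "ltK (\<Prod>\<alpha>\<in>supp_poly P. (P \<alpha> * mon x \<alpha>) ^ c \<alpha>) (\<Prod>\<alpha>\<in>supp_poly P. (y * mon x \<gamma>) ^ c \<alpha>)"
    by (rule K.prod_pow_strict[where w=c, OF fin _ a0]) (use H y0 mnz in \<open>auto simp: qf_nzd supp_poly_def\<close>)
  moreover have "(\<Prod>\<alpha>\<in>supp_poly P. (y * mon x \<gamma>) ^ c \<alpha>) = (y * mon x \<gamma>) ^ m"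
    using power_sum[of "y * mon x \<gamma>" c "supp_poly P"] mc(2) by simp
  moreover have "(\<Prod>\<alpha>\<in>supp_poly P. (P \<alpha> * mon x \<alpha>) ^ c \<alpha>) = (y * mon x \<gamma>) ^ m"
    by (rule mon_cands[OF fin mc(2,3,4)])
  ultimately show False by (simp add: ltK_def)
qed

lemma sum_tn: "(\<Sum>k\<in>to_nat ` S. g k) = (\<Sum>\<alpha>\<in>S. g (to_nat (\<alpha>::'b::countable)))"
  by (simp add: sum.reindex)

lemma prod_tn: "(\<Prod>k\<in>to_nat ` S. g k) = (\<Prod>\<alpha>\<in>S. g (to_nat (\<alpha>::'b::countable)))"
  by (simp add: prod.reindex)

lemma cert_conv:
  fixes S :: "('n::finite \<Rightarrow> nat) set" and \<gamma> :: "'n \<Rightarrow> nat"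
  assumes fin: "finite S" and ct: "cert (to_nat ` S) (\<lambda>k. \<gamma>) (\<lambda>k. from_nat k) t"
  shows "(\<Sum>\<alpha>\<in>S. t (to_nat \<alpha>)) \<ge> 1 \<and> (\<forall>i. (\<Sum>\<alpha>\<in>S. t (to_nat \<alpha>) * \<alpha> i) = (\<Sum>\<alpha>\<in>S. t (to_nat \<alpha>)) * \<gamma> i)"
proof
  obtain k where k: "k \<in> to_nat ` S" "t k \<noteq> 0" using ct unfolding cert_def by blast
  then obtain \<alpha> where a: "\<alpha> \<in> S" "t (to_nat \<alpha>) \<noteq> 0" by blast
  have "t (to_nat \<alpha>) \<le> (\<Sum>\<alpha>\<in>S. t (to_nat \<alpha>))"
    by (rule member_le_sum[where f="\<lambda>\<alpha>. t (to_nat \<alpha>)", OF a(1)]) (use fin in auto)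
  then show "(\<Sum>\<alpha>\<in>S. t (to_nat \<alpha>)) \<ge> 1" using a(2) by linarith
  show "\<forall>i. (\<Sum>\<alpha>\<in>S. t (to_nat \<alpha>) * \<alpha> i) = (\<Sum>\<alpha>\<in>S. t (to_nat \<alpha>)) * \<gamma> i"
  proof
    fix i
    have "(\<Sum>k\<in>to_nat ` S. t k * \<gamma> i) = (\<Sum>k\<in>to_nat ` S. t k * from_nat k i)"
      using ct unfolding cert_def by blast
    then show "(\<Sum>\<alpha>\<in>S. t (to_nat \<alpha>) * \<alpha> i) = (\<Sum>\<alpha>\<in>S. t (to_nat \<alpha>)) * \<gamma> i"
      by (simp add: sum_tn sum_distrib_right)
  qed
qed

lemma key:
  fixes P :: "('n::finite \<Rightarrow> nat) \<Rightarrow> 'a::qfield1" and \<gamma> :: "'n \<Rightarrow> nat"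
  assumes tot: "qf_total TYPE('a)" and ac: "qf_alg_closed TYPE('a)" and inf: "infinite (UNIV :: 'a set)"
    and fin: "finite (supp_poly P)"
  shows "\<exists>V. finite V \<and> V \<subseteq> conv_cands P \<gamma> \<and>
     (\<forall>y. y \<noteq> 0 \<longrightarrow> ((\<exists>x. (\<forall>j. x j \<noteq> 0) \<and> (\<forall>\<alpha>\<in>supp_poly P. ltK (P \<alpha> * mon x \<alpha>) (y * mon x \<gamma>)))
         \<longleftrightarrow> (\<forall>v\<in>V. ltK v y)))"
proof -
  interpret K: ogroup "{x::'a. x \<noteq> 0}" ltK by (rule K_ogroup[OF tot ac inf])
  define S where "S = supp_poly P"
  define I where "I = to_nat ` S"
  define p where "p = (\<lambda>k::nat. \<gamma>)"
  define q where "q = (\<lambda>k::nat. (from_nat k :: 'n \<Rightarrow> nat))"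
  have finI: "finite I" using fin by (simp add: I_def S_def)
  obtain T where fT: "finite T" and cT: "\<forall>t\<in>T. cert I p q t"
    and eqT: "\<forall>c d. (\<forall>r\<in>I. c r \<in> {x::'a. x \<noteq> 0} \<and> d r \<in> {x. x \<noteq> 0}) \<longrightarrow>
        (K.feas I p q c d \<longleftrightarrow> (\<forall>t\<in>T. ltK (\<Prod>r\<in>I. d r ^ t r) (\<Prod>r\<in>I. c r ^ t r)))"
    using K.fm[OF finI, of p q] unfolding K.FMP_def by blast
  define mt where "mt t = (\<Sum>\<alpha>\<in>S. t (to_nat \<alpha>) :: nat)" for t :: "nat \<Rightarrow> nat"
  define pt where "pt t = (\<Prod>\<alpha>\<in>S. P \<alpha> ^ t (to_nat \<alpha>))" for t :: "nat \<Rightarrow> nat"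
  define v where "v t = K.rt (mt t) (pt t)" for t
  have Pnz: "\<alpha> \<in> S \<Longrightarrow> P \<alpha> \<noteq> 0" for \<alpha> by (simp add: S_def supp_poly_def)
  have ptnz: "pt t \<noteq> 0" for t unfolding pt_def by (rule qf_prod_nz) (simp add: Pnz qf_pow_nz)
  have tT: "mt t \<ge> 1 \<and> (\<forall>i. (\<Sum>\<alpha>\<in>S. t (to_nat \<alpha>) * \<alpha> i) = mt t * \<gamma> i)" if "t \<in> T" for t
    using cert_conv[of S \<gamma> t] cT that fin unfolding mt_def I_def p_def q_def S_def by blast
  have vt: "v t \<noteq> 0 \<and> v t ^ mt t = pt t" if "t \<in> T" for t
    using K.rt[of "pt t" "mt t"] ptnz tT[OF that] unfolding v_def by auto
  have vcand: "v t \<in> conv_cands P \<gamma>" if "t \<in> T" for t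
    unfolding conv_cands_def
    using tT[OF that] vt[OF that] unfolding mt_def pt_def S_def
    by (intro CollectI exI[of _ "mt t"] exI[of _ "\<lambda>\<alpha>. t (to_nat \<alpha>)"]) (simp add: mt_def S_def)
  show ?thesis
  proof (intro exI[of _ "v ` T"] conjI allI impI)
    show "finite (v ` T)" using fT by simp
    show "v ` T \<subseteq> conv_cands P \<gamma>" using vcand by auto
    fix y :: 'a assume y: "y \<noteq> 0"
    have cd: "\<forall>r\<in>I. (\<lambda>k. y) r \<in> {x::'a. x \<noteq> 0} \<and> (\<lambda>k. P (from_nat k)) r \<in> {x. x \<noteq> 0}"
      using y Pnz by (auto simp: I_def)
    have e1: "K.feas I p q (\<lambda>k. y) (\<lambda>k. P (from_nat k)) \<longleftrightarrow>
       (\<exists>x. (\<forall>j. x j \<noteq> 0) \<and> (\<forall>\<alpha>\<in>supp_poly P. ltK (P \<alpha> * mon x \<alpha>) (y * mon x \<gamma>)))"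
      unfolding K.feas_def I_def p_def q_def S_def by (simp add: ball_img)
    have e2: "ltK (\<Prod>r\<in>I. P (from_nat r) ^ t r) (\<Prod>r\<in>I. y ^ t r) \<longleftrightarrow> ltK (v t) y" if t: "t \<in> T" for t
    proof -
      have "(\<Prod>r\<in>I. P (from_nat r) ^ t r) = pt t" by (simp add: I_def pt_def prod_tn)
      moreover have "(\<Prod>r\<in>I. y ^ t r) = y ^ mt t" by (simp add: I_def mt_def prod_tn power_sum)
      moreover have "ltK (pt t) (y ^ mt t) \<longleftrightarrow> ltK (v t) y"
      proof
        assume "ltK (pt t) (y ^ mt t)"
        then have "ltK (v t ^ mt t) (y ^ mt t)" using vt[OF t] by simp
        then show "ltK (v t) y" using K.pow_strict_rev[of "v t" y "mt t"] vt[OF t] y by simp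
      next
        assume "ltK (v t) y"
        then have "ltK (v t ^ mt t) (y ^ mt t)" using K.pow_strict[of "v t" y "mt t"] vt[OF t] tT[OF t] y by simp
        then show "ltK (pt t) (y ^ mt t)" using vt[OF t] by simp
      qed
      ultimately show ?thesis by simp
    qed
    have "(\<exists>x. (\<forall>j. x j \<noteq> 0) \<and> (\<forall>\<alpha>\<in>supp_poly P. ltK (P \<alpha> * mon x \<alpha>) (y * mon x \<gamma>)))
        \<longleftrightarrow> K.feas I p q (\<lambda>k. y) (\<lambda>k. P (from_nat k))" using e1 by simp
    also have "\<dots> \<longleftrightarrow> (\<forall>t\<in>T. ltK (\<Prod>r\<in>I. P (from_nat r) ^ t r) (\<Prod>r\<in>I. y ^ t r))"
      using eqT cd by simp
    also have "\<dots> \<longleftrightarrow> (\<forall>t\<in>T. ltK (v t) y)" using e2 by (intro ball_cong) auto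
    also have "\<dots> \<longleftrightarrow> (\<forall>w\<in>v ` T. ltK w y)" by (simp only: ball_img)
    finally show "(\<exists>x. (\<forall>j. x j \<noteq> 0) \<and> (\<forall>\<alpha>\<in>supp_poly P. ltK (P \<alpha> * mon x \<alpha>) (y * mon x \<gamma>)))
        \<longleftrightarrow> (\<forall>w\<in>v ` T. ltK w y)" .
  qed
qed

lemma hull_contra:
  fixes S :: "('n::finite \<Rightarrow> nat) set" and x :: "'n \<Rightarrow> real"
  assumes fin: "finite S" and h: "exp_to_real \<gamma> \<in> convex hull (exp_to_real ` S)"
    and x: "\<forall>j. x j > 0" and lt: "\<forall>\<alpha>\<in>S. mon x \<alpha> < mon x \<gamma>"
  shows False
proof -
  define w :: "real^'n" where "w = (\<chi> j. ln (x j))"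
  define E where "E = exp_to_real ` S"
  have mE: "mon x \<alpha> = exp (exp_to_real \<alpha> \<bullet> w)" for \<alpha>
  proof -
    have "exp (exp_to_real \<alpha> \<bullet> w) = exp (\<Sum>j\<in>UNIV. real (\<alpha> j) * ln (x j))"
      by (simp add: inner_vec_def exp_to_real_def w_def)
    also have "\<dots> = (\<Prod>j\<in>UNIV. exp (real (\<alpha> j) * ln (x j)))" by (simp add: exp_sum)
    also have "\<dots> = (\<Prod>j\<in>UNIV. x j ^ \<alpha> j)" using x by (simp add: exp_of_nat_mult)
    finally show ?thesis by (simp add: mon_def)
  qed
  have lt2: "\<forall>v\<in>E. v \<bullet> w < exp_to_real \<gamma> \<bullet> w" using lt mE by (auto simp: E_def)
  have finE: "finite E" using fin by (simp add: E_def)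
  have hE: "exp_to_real \<gamma> \<in> convex hull E" using h by (simp add: E_def)
  then obtain u where u: "\<forall>v\<in>E. 0 \<le> u v" "sum u E = 1" "(\<Sum>v\<in>E. u v *\<^sub>R v) = exp_to_real \<gamma>"
    unfolding convex_hull_finite[OF finE] by blast
  have "\<exists>v\<in>E. u v \<noteq> 0"
  proof (rule ccontr)
    assume "\<not> (\<exists>v\<in>E. u v \<noteq> 0)"
    then have "sum u E = 0" by simp
    then show False using u(2) by simp
  qed
  then obtain v0 where v0: "v0 \<in> E" "u v0 \<noteq> 0" by blast
  have uv0: "u v0 > 0" using v0 u(1) by (simp add: less_le)
  have "exp_to_real \<gamma> \<bullet> w = (\<Sum>v\<in>E. u v * (v \<bullet> w))"
    unfolding u(3)[symmetric] by (simp add: inner_sum_left)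
  also have "\<dots> < (\<Sum>v\<in>E. u v * (exp_to_real \<gamma> \<bullet> w))"
  proof (rule sum_strict_mono_ex1[OF finE])
    show "\<forall>v\<in>E. u v * (v \<bullet> w) \<le> u v * (exp_to_real \<gamma> \<bullet> w)"
      using u(1) lt2 by (simp add: mult_left_mono less_imp_le)
    show "\<exists>v\<in>E. u v * (v \<bullet> w) < u v * (exp_to_real \<gamma> \<bullet> w)"
      using v0(1) uv0 lt2 by (intro bexI[of _ v0] mult_strict_left_mono) auto
  qed
  also have "\<dots> = exp_to_real \<gamma> \<bullet> w" using u(2) by (simp add: sum_distrib_right[symmetric])
  finally show False by simp
qed

lemma hull_cand:
  fixes P :: "('n::finite \<Rightarrow> nat) \<Rightarrow> 'a::qfield1"
  assumes ac: "qf_alg_closed TYPE('a)" and fin: "finite (supp_poly P)" and g: "\<gamma> \<in> hull_lattice P"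
  shows "conv_cands P \<gamma> \<noteq> {}"
proof -
  interpret R: ogroup "{x::real. x > 0}" "(<)" by (rule R_ogroup)
  define S where "S = supp_poly P"
  define I where "I = to_nat ` S"
  define p where "p = (\<lambda>k::nat. \<gamma>)"
  define q where "q = (\<lambda>k::nat. (from_nat k :: 'n \<Rightarrow> nat))"
  have finI: "finite I" using fin by (simp add: I_def S_def)
  obtain T where H: "finite T \<and> (\<forall>t\<in>T. cert I p q t) \<and> (\<forall>c d. (\<forall>r\<in>I. c r \<in> {x::real. x > 0} \<and> d r \<in> {x. x > 0}) \<longrightarrow>
        (R.feas I p q c d \<longleftrightarrow> (\<forall>t\<in>T. (\<Prod>r\<in>I. d r ^ t r) < (\<Prod>r\<in>I. c r ^ t r))))"
    using R.fm[OF finI, of p q] unfolding R.FMP_def by (elim exE) (rule that)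
  have fT: "finite T" using H by (rule conjunct1)
  have cT: "\<forall>t\<in>T. cert I p q t" using H by (rule conjunct2[THEN conjunct1])
  have eqT: "\<forall>c d. (\<forall>r\<in>I. c r \<in> {x::real. x > 0} \<and> d r \<in> {x. x > 0}) \<longrightarrow>
        (R.feas I p q c d \<longleftrightarrow> (\<forall>t\<in>T. (\<Prod>r\<in>I. d r ^ t r) < (\<Prod>r\<in>I. c r ^ t r)))"
    using H by (rule conjunct2[THEN conjunct2])
  show ?thesis
  proof (cases "T = {}")
    case True
    have "R.feas I p q (\<lambda>k. 1) (\<lambda>k. 1) \<longleftrightarrow> (\<forall>t\<in>T. (\<Prod>r\<in>I. (\<lambda>k. 1::real) r ^ t r) < (\<Prod>r\<in>I. (\<lambda>k. 1::real) r ^ t r))"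
      using eqT by simp
    then have "R.feas I p q (\<lambda>k. 1) (\<lambda>k. 1)" using True by simp
    then obtain x :: "'n \<Rightarrow> real" where x0: "\<forall>j. x j \<in> {x. x > 0}" "\<forall>r\<in>I. 1 * mon x (q r) < 1 * mon x (p r)"
      unfolding R.feas_def by blast
    have x: "\<forall>j. x j > 0" "\<forall>r\<in>I. mon x (q r) < mon x (p r)" using x0 by auto
    have "\<forall>\<alpha>\<in>S. mon x \<alpha> < mon x \<gamma>" using x(2) by (simp add: I_def p_def q_def)
    moreover have "exp_to_real \<gamma> \<in> convex hull (exp_to_real ` S)" using g by (simp add: hull_lattice_def S_def)
    moreover have "finite S" using fin by (simp add: S_def)
    ultimately show ?thesis using hull_contra[of S \<gamma> x] x(1) by blast
  next
    case False
    then obtain t where t: "t \<in> T" by blast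
    have cc: "(\<Sum>\<alpha>\<in>S. t (to_nat \<alpha>)) \<ge> 1 \<and> (\<forall>i. (\<Sum>\<alpha>\<in>S. t (to_nat \<alpha>) * \<alpha> i) = (\<Sum>\<alpha>\<in>S. t (to_nat \<alpha>)) * \<gamma> i)"
      using cert_conv[of S \<gamma> t] cT t fin unfolding I_def p_def q_def S_def by blast
    have pnz: "(\<Prod>\<alpha>\<in>S. P \<alpha> ^ t (to_nat \<alpha>)) \<noteq> 0"
      by (rule qf_prod_nz) (simp add: qf_pow_nz S_def supp_poly_def)
    obtain y where y: "y ^ (\<Sum>\<alpha>\<in>S. t (to_nat \<alpha>)) = (\<Prod>\<alpha>\<in>S. P \<alpha> ^ t (to_nat \<alpha>))"
      using qf_root[OF ac pnz, of "\<Sum>\<alpha>\<in>S. t (to_nat \<alpha>)"] cc by auto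
    have "y \<in> conv_cands P \<gamma>" unfolding conv_cands_def
      using cc y unfolding S_def by (intro CollectI exI[of _ "\<Sum>\<alpha>\<in>S. t (to_nat \<alpha>)"] exI[of _ "\<lambda>\<alpha>. t (to_nat \<alpha>)"]) (simp add: S_def)
    then show ?thesis by blast
  qed
qed

lemma cand_hull:
  fixes P :: "('n::finite \<Rightarrow> nat) \<Rightarrow> 'a::qfield1"
  assumes fin: "finite (supp_poly P)" and y: "y \<in> conv_cands P \<gamma>"
  shows "\<gamma> \<in> hull_lattice P"
proof -
  obtain m c where mc: "m \<ge> 1" "(\<Sum>\<alpha>\<in>supp_poly P. c \<alpha>) = m" "\<forall>i. (\<Sum>\<alpha>\<in>supp_poly P. c \<alpha> * \<alpha> i) = m * \<gamma> i"
    using y unfolding conv_cands_def by blast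
  have "(\<Sum>\<alpha>\<in>supp_poly P. (real (c \<alpha>) / real m) *\<^sub>R exp_to_real \<alpha>) \<in> convex hull (exp_to_real ` supp_poly P)"
  proof (rule convex_sum[OF fin convex_convex_hull])
    show "(\<Sum>\<alpha>\<in>supp_poly P. real (c \<alpha>) / real m) = 1"
      using mc by (simp add: sum_divide_distrib[symmetric] of_nat_sum[symmetric])
    show "\<And>\<alpha>. \<alpha> \<in> supp_poly P \<Longrightarrow> 0 \<le> real (c \<alpha>) / real m" by simp
    show "\<And>\<alpha>. \<alpha> \<in> supp_poly P \<Longrightarrow> exp_to_real \<alpha> \<in> convex hull (exp_to_real ` supp_poly P)"
      by (simp add: hull_inc)
  qed
  moreover have "(\<Sum>\<alpha>\<in>supp_poly P. (real (c \<alpha>) / real m) *\<^sub>R exp_to_real \<alpha>) = exp_to_real \<gamma>"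
  proof (rule vec_eq_iff[THEN iffD2], rule allI)
    fix i
    have "(\<Sum>\<alpha>\<in>supp_poly P. (real (c \<alpha>) / real m) *\<^sub>R exp_to_real \<alpha>) $ i = (\<Sum>\<alpha>\<in>supp_poly P. real (c \<alpha> * \<alpha> i)) / real m"
      by (simp add: exp_to_real_def sum_divide_distrib)
    also have "\<dots> = real (m * \<gamma> i) / real m" using mc(3) by (simp only: of_nat_sum[symmetric])
    also have "\<dots> = exp_to_real \<gamma> $ i" using mc(1) by (simp add: exp_to_real_def)
    finally show "(\<Sum>\<alpha>\<in>supp_poly P. (real (c \<alpha>) / real m) *\<^sub>R exp_to_real \<alpha>) $ i = exp_to_real \<gamma> $ i" .
  qed
  ultimately show ?thesis unfolding hull_lattice_def by simp
qed


lemma qf_pow_mono: "qf_le (a::'a::qfield1) b \<Longrightarrow> qf_le (a ^ n) (b ^ n)"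
  by (induction n) (auto simp: qf_refl qf_mult_mono2)

lemma qf_prod_mono: "(\<And>x. x \<in> A \<Longrightarrow> qf_le (f x) (g x :: 'a::qfield1)) \<Longrightarrow> qf_le (prod f A) (prod g A)"
  by (induction A rule: infinite_finite_induct) (auto simp: qf_refl qf_mult_mono2)

lemma qf_pow_le_rev:
  assumes tot: "qf_total TYPE('a::qfield1)" and ac: "qf_alg_closed TYPE('a)" and inf: "infinite (UNIV :: 'a set)"
    and m: "m > 0" and h: "qf_le ((a::'a) ^ m) (b ^ m)"
  shows "qf_le a b"
proof (rule ccontr)
  interpret K: ogroup "{x::'a. x \<noteq> 0}" ltK by (rule K_ogroup[OF tot ac inf])
  assume n: "\<not> qf_le a b"
  then have ba: "ltK b a" using qf_not_le[OF tot] by blast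
  have a0: "a \<noteq> 0" using n qf_zero_le by blast
  show False
  proof (cases "b = 0")
    case True
    then have "qf_le (a ^ m) 0" using h m by (simp add: power_0_left)
    then show False using qf_le_zero qf_pow_nz a0 by blast
  next
    case False
    then have "ltK (b ^ m) (a ^ m)" using K.pow_strict[of b a m] ba a0 m by simp
    then show False using h qf_antisym unfolding ltK_def by blast
  qed
qed

lemma max_cand:
  fixes P :: "('n::finite \<Rightarrow> nat) \<Rightarrow> 'a::qfield1"
  assumes tot: "qf_total TYPE('a)" and ac: "qf_alg_closed TYPE('a)" and inf: "infinite (UNIV :: 'a set)"
    and fin: "finite (supp_poly P)" and ne: "conv_cands P \<gamma> \<noteq> {}"
  shows "\<exists>y\<in>conv_cands P \<gamma>. \<forall>z\<in>conv_cands P \<gamma>. qf_le z y"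
proof -
  obtain V where fV: "finite V" and sV: "V \<subseteq> conv_cands P \<gamma>"
    and eV: "\<forall>y. y \<noteq> 0 \<longrightarrow> ((\<exists>x. (\<forall>j. x j \<noteq> 0) \<and> (\<forall>\<alpha>\<in>supp_poly P. ltK (P \<alpha> * mon x \<alpha>) (y * mon x \<gamma>)))
         \<longleftrightarrow> (\<forall>v\<in>V. ltK v y))"
    using key[OF tot ac inf fin, of \<gamma>] by (elim exE conjE) (rule that)
  have zle: "\<exists>v\<in>V. qf_le z v" if z: "z \<in> conv_cands P \<gamma>" for z
  proof (rule ccontr)
    assume "\<not> (\<exists>v\<in>V. qf_le z v)"
    then have "\<forall>v\<in>V. ltK v z" using qf_not_le[OF tot] by blast
    moreover have "z \<noteq> 0" using cand_nz[OF z] .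
    ultimately obtain x where x: "\<forall>j. x j \<noteq> 0" "\<forall>\<alpha>\<in>supp_poly P. ltK (P \<alpha> * mon x \<alpha>) (z * mon x \<gamma>)"
      using eV by blast
    then show False using cand_infeasible[OF tot ac inf fin z x(1)] by blast
  qed
  obtain z0 where z0: "z0 \<in> conv_cands P \<gamma>" using ne by blast
  have Vne: "V \<noteq> {}" using zle[OF z0] by blast
  obtain M where M: "M \<in> V" "sum (\<lambda>v. v) V = M" using qf_sum_attained[OF tot fV Vne, of "\<lambda>v. v"] by blast
  have Mmax: "qf_le v M" if "v \<in> V" for v using qf_le_sum[OF fV that, of "\<lambda>v. v"] M by simp
  show ?thesis
  proof (intro bexI[of _ M] ballI)
    show "M \<in> conv_cands P \<gamma>" using M sV by blast
    fix z assume z: "z \<in> conv_cands P \<gamma>"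
    then obtain v where v: "v \<in> V" "qf_le z v" using zle by blast
    then show "qf_le z M" using Mmax qf_trans by blast
  qed
qed

lemma conv_char:
  fixes P :: "('n::finite \<Rightarrow> nat) \<Rightarrow> 'a::qfield1"
  assumes tot: "qf_total TYPE('a)" and ac: "qf_alg_closed TYPE('a)" and inf: "infinite (UNIV :: 'a set)"
    and fin: "finite (supp_poly P)" and g: "\<gamma> \<in> hull_lattice P"
  shows "conv_poly P \<gamma> \<in> conv_cands P \<gamma> \<and> (\<forall>z\<in>conv_cands P \<gamma>. qf_le z (conv_poly P \<gamma>))"
proof -
  obtain y where y: "y \<in> conv_cands P \<gamma>" "\<forall>z\<in>conv_cands P \<gamma>. qf_le z y"
    using max_cand[OF tot ac inf fin hull_cand[OF ac fin g]] by blast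
  have "(THE y. y \<in> conv_cands P \<gamma> \<and> (\<forall>z\<in>conv_cands P \<gamma>. qf_le z y)) = y"
  proof (rule the_equality)
    show "y \<in> conv_cands P \<gamma> \<and> (\<forall>z\<in>conv_cands P \<gamma>. qf_le z y)" using y by blast
    fix y' assume "y' \<in> conv_cands P \<gamma> \<and> (\<forall>z\<in>conv_cands P \<gamma>. qf_le z y')"
    then show "y' = y" using y qf_antisym by blast
  qed
  then have "conv_poly P \<gamma> = y" using g by (simp add: conv_poly_def)
  then show ?thesis using y by simp
qed

lemma conv_nz_iff:
  fixes P :: "('n::finite \<Rightarrow> nat) \<Rightarrow> 'a::qfield1"
  assumes tot: "qf_total TYPE('a)" and ac: "qf_alg_closed TYPE('a)" and inf: "infinite (UNIV :: 'a set)"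
    and fin: "finite (supp_poly P)"
  shows "conv_poly P \<gamma> \<noteq> 0 \<longleftrightarrow> \<gamma> \<in> hull_lattice P"
proof
  assume "conv_poly P \<gamma> \<noteq> 0"
  then show "\<gamma> \<in> hull_lattice P" by (auto simp: conv_poly_def split: if_splits)
next
  assume g: "\<gamma> \<in> hull_lattice P"
  show "conv_poly P \<gamma> \<noteq> 0" using conv_char[OF tot ac inf fin g] cand_nz by blast
qed

lemma hull_finite:
  fixes P :: "('n::finite \<Rightarrow> nat) \<Rightarrow> 'a::qfield1"
  assumes ac: "qf_alg_closed TYPE('a)" and fin: "finite (supp_poly P)"
  shows "finite (hull_lattice P)"
proof -
  define B where "B j = (\<Sum>\<alpha>\<in>supp_poly P. \<alpha> j)" for j
  have sub: "hull_lattice P \<subseteq> PiE UNIV (\<lambda>j. {..B j})"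
  proof
    fix \<gamma> assume g: "\<gamma> \<in> hull_lattice P"
    obtain y where "y \<in> conv_cands P \<gamma>" using hull_cand[OF ac fin g] by blast
    then obtain m c where mc: "m \<ge> 1" "(\<Sum>\<alpha>\<in>supp_poly P. c \<alpha>) = m" "\<forall>i. (\<Sum>\<alpha>\<in>supp_poly P. c \<alpha> * \<alpha> i) = m * \<gamma> i"
      unfolding conv_cands_def by blast
    have "\<gamma> j \<le> B j" for j
    proof -
      have "m * \<gamma> j = (\<Sum>\<alpha>\<in>supp_poly P. c \<alpha> * \<alpha> j)" using mc by simp
      also have "\<dots> \<le> (\<Sum>\<alpha>\<in>supp_poly P. c \<alpha> * B j)"
      proof (rule sum_mono)
        fix \<alpha> assume a: "\<alpha> \<in> supp_poly P"
        have "\<alpha> j \<le> B j" unfolding B_def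
          by (rule member_le_sum[where f="\<lambda>\<alpha>. \<alpha> j", OF a]) (use fin in auto)
        then show "c \<alpha> * \<alpha> j \<le> c \<alpha> * B j" by simp
      qed
      also have "\<dots> = m * B j" using mc(2) by (simp add: sum_distrib_right[symmetric])
      finally show ?thesis using mc(1) by simp
    qed
    then show "\<gamma> \<in> PiE UNIV (\<lambda>j. {..B j})" by (simp add: PiE_UNIV_domain)
  qed
  show ?thesis by (rule finite_subset[OF sub]) (simp add: finite_PiE)
qed

lemma A2:
  fixes P :: "('n::finite \<Rightarrow> nat) \<Rightarrow> 'a::qfield1"
  assumes tot: "qf_total TYPE('a)" and ac: "qf_alg_closed TYPE('a)" and inf: "infinite (UNIV :: 'a set)"
    and fin: "finite (supp_poly P)"
  shows "qf_le (conv_poly P \<gamma> * mon x \<gamma>) (peval P x)"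
proof (cases "\<gamma> \<in> hull_lattice P")
  case False
  then show ?thesis by (simp add: conv_poly_def qf_zero_le)
next
  case True
  define y where "y = conv_poly P \<gamma>"
  have "y \<in> conv_cands P \<gamma>" using conv_char[OF tot ac inf fin True] y_def by blast
  then obtain m c where mc: "m \<ge> 1" "(\<Sum>\<alpha>\<in>supp_poly P. c \<alpha>) = m" "\<forall>i. (\<Sum>\<alpha>\<in>supp_poly P. c \<alpha> * \<alpha> i) = m * \<gamma> i"
    "y ^ m = (\<Prod>\<alpha>\<in>supp_poly P. P \<alpha> ^ c \<alpha>)"
    unfolding conv_cands_def by blast
  have "(y * mon x \<gamma>) ^ m = (\<Prod>\<alpha>\<in>supp_poly P. (P \<alpha> * mon x \<alpha>) ^ c \<alpha>)"
    using mon_cands[OF fin mc(2,3,4)] by simp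
  also have "qf_le \<dots> (\<Prod>\<alpha>\<in>supp_poly P. (peval P x) ^ c \<alpha>)"
  proof (rule qf_prod_mono, rule qf_pow_mono)
    fix \<alpha> assume "\<alpha> \<in> supp_poly P"
    then show "qf_le (P \<alpha> * mon x \<alpha>) (peval P x)"
      unfolding peval_mon by (rule qf_le_sum[OF fin])
  qed
  also have "(\<Prod>\<alpha>\<in>supp_poly P. (peval P x) ^ c \<alpha>) = peval P x ^ m"
    using power_sum[of "peval P x" c "supp_poly P"] mc(2) by simp
  finally have "qf_le ((y * mon x \<gamma>) ^ m) (peval P x ^ m)" .
  then show ?thesis using qf_pow_le_rev[OF tot ac inf, of m "y * mon x \<gamma>" "peval P x"] mc(1) y_def by simp
qed

lemma A1:
  fixes P :: "('n::finite \<Rightarrow> nat) \<Rightarrow> 'a::qfield1"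
  assumes tot: "qf_total TYPE('a)" and ac: "qf_alg_closed TYPE('a)" and inf: "infinite (UNIV :: 'a set)"
    and fin: "finite (supp_poly P)" and a: "\<alpha> \<in> supp_poly P"
  shows "\<alpha> \<in> hull_lattice P \<and> qf_le (P \<alpha>) (conv_poly P \<alpha>)"
proof -
  define c where "c \<beta> = (if \<beta> = \<alpha> then 1 else 0::nat)" for \<beta>
  have s1: "(\<Sum>\<beta>\<in>supp_poly P. c \<beta>) = 1" using a fin by (simp add: c_def)
  have s2: "(\<Sum>\<beta>\<in>supp_poly P. c \<beta> * \<beta> i) = 1 * \<alpha> i" for i
  proof -
    have "(\<Sum>\<beta>\<in>supp_poly P. c \<beta> * \<beta> i) = (\<Sum>\<beta>\<in>supp_poly P. if \<beta> = \<alpha> then \<beta> i else 0)"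
      by (rule sum.cong) (auto simp: c_def)
    then show ?thesis using a fin by simp
  qed
  have s3: "P \<alpha> ^ 1 = (\<Prod>\<beta>\<in>supp_poly P. P \<beta> ^ c \<beta>)"
  proof -
    have "(\<Prod>\<beta>\<in>supp_poly P. P \<beta> ^ c \<beta>) = (\<Prod>\<beta>\<in>supp_poly P. if \<beta> = \<alpha> then P \<beta> else 1)"
      by (rule prod.cong) (auto simp: c_def)
    then show ?thesis using a fin by simp
  qed
  have cand: "P \<alpha> \<in> conv_cands P \<alpha>" unfolding conv_cands_def
    using s1 s2 s3 by (intro CollectI exI[of _ "1::nat"] exI[of _ c]) simp
  have h: "\<alpha> \<in> hull_lattice P" using cand_hull[OF fin cand] .
  show ?thesis using h conv_char[OF tot ac inf fin h] cand by blast
qed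

lemma part_a:
  fixes P :: "('n::finite \<Rightarrow> nat) \<Rightarrow> 'a::qfield1"
  assumes tot: "qf_total TYPE('a)" and ac: "qf_alg_closed TYPE('a)" and inf: "infinite (UNIV :: 'a set)"
    and fin: "finite (supp_poly P)"
  shows "peval (conv_poly P) x = peval P x"
proof (rule qf_antisym)
  have supp: "supp_poly (conv_poly P) = hull_lattice P"
    using conv_nz_iff[OF tot ac inf fin] by (auto simp: supp_poly_def)
  have finH: "finite (hull_lattice P)" by (rule hull_finite[OF ac fin])
  show "qf_le (peval (conv_poly P) x) (peval P x)"
    unfolding peval_mon[of "conv_poly P"] supp
    by (rule qf_sum_le[OF finH]) (rule A2[OF tot ac inf fin])
  show "qf_le (peval P x) (peval (conv_poly P) x)"
    unfolding peval_mon[of P]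
  proof (rule qf_sum_le[OF fin])
    fix \<alpha> assume a: "\<alpha> \<in> supp_poly P"
    have h: "\<alpha> \<in> hull_lattice P" "qf_le (P \<alpha>) (conv_poly P \<alpha>)" using A1[OF tot ac inf fin a] by auto
    have "qf_le (P \<alpha> * mon x \<alpha>) (conv_poly P \<alpha> * mon x \<alpha>)" by (rule qf_mult_mono[OF h(2)])
    moreover have "qf_le (conv_poly P \<alpha> * mon x \<alpha>) (peval (conv_poly P) x)"
      unfolding peval_mon[of "conv_poly P"] supp by (rule qf_le_sum[OF finH h(1)])
    ultimately show "qf_le (P \<alpha> * mon x \<alpha>) (peval (conv_poly P) x)" by (rule qf_trans)
  qed
qed

lemma dominated:
  fixes P :: "('n::finite \<Rightarrow> nat) \<Rightarrow> 'a::qfield1"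
  assumes tot: "qf_total TYPE('a)" and ac: "qf_alg_closed TYPE('a)" and inf: "infinite (UNIV :: 'a set)"
    and fin: "finite (supp_poly P)" and y: "y \<noteq> 0" and H: "\<forall>x. qf_le (y * mon x \<gamma>) (peval P x)"
  shows "\<exists>z\<in>conv_cands P \<gamma>. qf_le y z"
proof -
  obtain V where fV: "finite V" and sV: "V \<subseteq> conv_cands P \<gamma>"
    and eV: "\<forall>y. y \<noteq> 0 \<longrightarrow> ((\<exists>x. (\<forall>j. x j \<noteq> 0) \<and> (\<forall>\<alpha>\<in>supp_poly P. ltK (P \<alpha> * mon x \<alpha>) (y * mon x \<gamma>)))
         \<longleftrightarrow> (\<forall>v\<in>V. ltK v y))"
    using key[OF tot ac inf fin, of \<gamma>] by (elim exE conjE) (rule that)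
  have "\<exists>v\<in>V. qf_le y v"
  proof (rule ccontr)
    assume "\<not> (\<exists>v\<in>V. qf_le y v)"
    then have "\<forall>v\<in>V. ltK v y" using qf_not_le[OF tot] by blast
    then obtain x where x: "\<forall>j. x j \<noteq> 0" "\<forall>\<alpha>\<in>supp_poly P. ltK (P \<alpha> * mon x \<alpha>) (y * mon x \<gamma>)"
      using eV y by blast
    have ym: "y * mon x \<gamma> \<noteq> 0" using qf_nzd y mon_nz x(1) by blast
    show False
    proof (cases "supp_poly P = {}")
      case True
      then have "qf_le (y * mon x \<gamma>) 0" using H[rule_format, of x] by (simp add: peval_mon)
      then show False using qf_le_zero ym by blast
    next
      case False
      then obtain \<alpha> where a: "\<alpha> \<in> supp_poly P" "peval P x = P \<alpha> * mon x \<alpha>"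
        using qf_sum_attained[OF tot fin False, of "\<lambda>\<alpha>. P \<alpha> * mon x \<alpha>"] by (auto simp: peval_mon)
      have "ltK (peval P x) (y * mon x \<gamma>)" using x(2) a by simp
      then show False using H qf_antisym unfolding ltK_def by blast
    qed
  qed
  then show ?thesis using sV by blast
qed

lemma dom_conv:
  fixes P Q :: "('n::finite \<Rightarrow> nat) \<Rightarrow> 'a::qfield1"
  assumes tot: "qf_total TYPE('a)" and ac: "qf_alg_closed TYPE('a)" and inf: "infinite (UNIV :: 'a set)"
    and finP: "finite (supp_poly P)" and finQ: "finite (supp_poly Q)" and eq: "\<forall>x. peval P x = peval Q x"
  shows "qf_le (conv_poly P \<gamma>) (conv_poly Q \<gamma>)"
proof (cases "conv_poly P \<gamma> = 0")
  case True then show ?thesis by (simp add: qf_zero_le)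
next
  case False
  define y where "y = conv_poly P \<gamma>"
  have H: "\<forall>x. qf_le (y * mon x \<gamma>) (peval Q x)" using A2[OF tot ac inf finP] eq y_def by metis
  have y0: "y \<noteq> 0" using False y_def by simp
  obtain z where z: "z \<in> conv_cands Q \<gamma>" "qf_le y z" using dominated[OF tot ac inf finQ y0 H] by blast
  have h: "\<gamma> \<in> hull_lattice Q" using cand_hull[OF finQ z(1)] .
  have "qf_le z (conv_poly Q \<gamma>)" using conv_char[OF tot ac inf finQ h] z(1) by blast
  then show ?thesis using z(2) qf_trans y_def by blast
qed

theorem lemma3p6:
  fixes P Q :: "('n::finite \<Rightarrow> nat) \<Rightarrow> 'a::qfield1"
  assumes "infinite (UNIV :: 'a set)"
    and "qf_total TYPE('a)"
    and "qf_alg_closed TYPE('a)"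
    and "finite (supp_poly P)"
    and "finite (supp_poly Q)"
  shows "(\<forall>x. peval (conv_poly P) x = peval P x)
         \<and> ((\<forall>x. peval P x = peval Q x) \<longleftrightarrow> conv_poly P = conv_poly Q)"
proof -
  note tot = assms(2) and ac = assms(3) and inf = assms(1)
  have a: "\<forall>x. peval (conv_poly P) x = peval P x" using part_a[OF tot ac inf assms(4)] by blast
  have aQ: "\<forall>x. peval (conv_poly Q) x = peval Q x" using part_a[OF tot ac inf assms(5)] by blast
  have "(\<forall>x. peval P x = peval Q x) \<longleftrightarrow> conv_poly P = conv_poly Q"
  proof
    assume eq: "\<forall>x. peval P x = peval Q x"
    have eq': "\<forall>x. peval Q x = peval P x" using eq by simp
    show "conv_poly P = conv_poly Q"
    proof
      fix \<gamma>
      show "conv_poly P \<gamma> = conv_poly Q \<gamma>"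
        using dom_conv[OF tot ac inf assms(4) assms(5) eq, of \<gamma>] dom_conv[OF tot ac inf assms(5) assms(4) eq', of \<gamma>]
        by (rule qf_antisym)
    qed
  next
    assume "conv_poly P = conv_poly Q"
    then show "\<forall>x. peval P x = peval Q x" using a aQ by metis
  qed
  then show ?thesis using a by blast
qed

end
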